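(* The set $\mathcal{S}$ of all signatures of continuous bounded variation paths is a linearly independent subset of $T((V))$; that is, any finitely many pairwise distinct elements of $\mathcal{S}$ are linearly independent.
   Context: $V$ is a finite-dimensional real vector space and $T((V))=\prod_{k\ge0}V^{\otimes k}$ is the space of formal tensor series. For a continuous bounded variation path $\gamma$ and $s<t$, $S(\gamma)_{s,t}=1+\sum_{k\ge1}\int_{s<u_1<\dots<u_k<t}d\gamma_{u_1}\otimes\cdots\otimes d\gamma_{u_k}\in T((V))$, and $\mathcal{S}=\{S(\gamma)_{s,t}:\gamma\text{ continuous of bounded variation},\ s<t\}$. *)

theory Defs
  imports "HOL-Analysis.Analysis"
begin

definition is_partition :: "real list \<Rightarrow> real \<Rightarrow> real \<Rightarrow> bool" where
  "is_partition xs a b \<longleftrightarrow> length xs \<ge> 2 \<and> sorted_wrt (<) xs \<and> hd xs = a \<and> last xs = b"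

definition mesh :: "real list \<Rightarrow> real" where
  "mesh xs = Max (insert 0 {xs ! Suc i - xs ! i | i. Suc i < length xs})"

definition bounded_variation_on :: "(real \<Rightarrow> 'v::real_normed_vector) \<Rightarrow> real \<Rightarrow> real \<Rightarrow> bool" where
  "bounded_variation_on \<gamma> a b \<longleftrightarrow>
     (\<exists>B. \<forall>xs. is_partition xs a b \<longrightarrow>
        (\<Sum>i<length xs - 1. norm (\<gamma> (xs ! Suc i) - \<gamma> (xs ! i))) \<le> B)"

definition is_tagged_partition :: "real list \<Rightarrow> real list \<Rightarrow> real \<Rightarrow> real \<Rightarrow> bool" where
  "is_tagged_partition xs ts a b \<longleftrightarrow> is_partition xs a b \<and> length ts = length xs - 1 \<and>
     (\<forall>i < length ts. xs ! i \<le> ts ! i \<and> ts ! i \<le> xs ! Suc i)"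

definition rs_sum :: "(real \<Rightarrow> real) \<Rightarrow> (real \<Rightarrow> real) \<Rightarrow> real list \<Rightarrow> real list \<Rightarrow> real" where
  "rs_sum f g xs ts = (\<Sum>i<length ts. f (ts ! i) * (g (xs ! Suc i) - g (xs ! i)))"

definition has_rs_integral :: "(real \<Rightarrow> real) \<Rightarrow> (real \<Rightarrow> real) \<Rightarrow> real \<Rightarrow> real \<Rightarrow> real \<Rightarrow> bool" where
  "has_rs_integral f g a b I \<longleftrightarrow>
     (\<forall>\<epsilon>>0. \<exists>\<delta>>0. \<forall>xs ts. is_tagged_partition xs ts a b \<and> mesh xs < \<delta> \<longrightarrow>
        \<bar>rs_sum f g xs ts - I\<bar> < \<epsilon>)"

definition rs_integral :: "(real \<Rightarrow> real) \<Rightarrow> (real \<Rightarrow> real) \<Rightarrow> real \<Rightarrow> real \<Rightarrow> real" where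
  "rs_integral f g a b = (if a < b then (THE I. has_rs_integral f g a b I) else 0)"

text \<open>Iterated integrals, word given in reversed order:
  iter_int g s (e # w) t = integral over [s,t] of iter_int g s w u  d(g u \<bullet> e).\<close>
primrec iter_int :: "(real \<Rightarrow> 'v::euclidean_space) \<Rightarrow> real \<Rightarrow> 'v list \<Rightarrow> real \<Rightarrow> real" where
  "iter_int \<gamma> s [] t = 1"
| "iter_int \<gamma> s (e # w) t = rs_integral (\<lambda>u. iter_int \<gamma> s w u) (\<lambda>u. \<gamma> u \<bullet> e) s t"

text \<open>An element of T((V)) is represented by its coordinates w.r.t. the basis
  e_{i1} \<otimes> ... \<otimes> e_{ik}, indexed by words over Basis (other words get 0).
  The signature coordinate of word [e1,...,ek] is
  the integral over s<u1<...<uk<t of d\<gamma>^{e1}_{u1} ... d\<gamma>^{ek}_{uk}.\<close>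
definition signature :: "(real \<Rightarrow> 'v::euclidean_space) \<Rightarrow> real \<Rightarrow> real \<Rightarrow> ('v list \<Rightarrow> real)" where
  "signature \<gamma> s t = (\<lambda>w. if w \<in> lists Basis then iter_int \<gamma> s (rev w) t else 0)"

definition signatures :: "('v::euclidean_space list \<Rightarrow> real) set" where
  "signatures = {signature \<gamma> s t | \<gamma> s t. s < t \<and> continuous_on {s..t} \<gamma> \<and> bounded_variation_on \<gamma> s t}"

end

theory Submission
  imports Defs
begin


fun psum :: "(real \<Rightarrow> real \<Rightarrow> real) \<Rightarrow> real list \<Rightarrow> real" where
  "psum F (x # y # zs) = F x y + psum F (y # zs)"
| "psum F _ = 0"

fun allpairs :: "(real \<Rightarrow> real \<Rightarrow> bool) \<Rightarrow> real list \<Rightarrow> bool" where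
  "allpairs P (x # y # zs) = (P x y \<and> allpairs P (y # zs))"
| "allpairs P _ = True"

fun tsum :: "(real \<Rightarrow> real) \<Rightarrow> (real \<Rightarrow> real) \<Rightarrow> real list \<Rightarrow> real list \<Rightarrow> real" where
  "tsum f g (x # y # zs) (t # ts) = f t * (g y - g x) + tsum f g (y # zs) ts"
| "tsum f g _ _ = 0"

fun tagok :: "real list \<Rightarrow> real list \<Rightarrow> bool" where
  "tagok (x # y # zs) (t # ts) = (x \<le> t \<and> t \<le> y \<and> tagok (y # zs) ts)"
| "tagok [x] [] = True"
| "tagok _ _ = False"

lemma psum_sum: "(\<Sum>i<length xs - 1. F (xs ! i) (xs ! Suc i)) = psum F xs"
proof (induction F xs rule: psum.induct)
  case (1 F x y zs)
  have "(\<Sum>i<length (x # y # zs) - 1. F ((x # y # zs) ! i) ((x # y # zs) ! Suc i))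
      = (\<Sum>i<Suc (length (y # zs) - 1). F ((x # y # zs) ! i) ((x # y # zs) ! Suc i))" by simp
  also have "\<dots> = F x y + (\<Sum>i<length (y # zs) - 1. F ((y # zs) ! i) ((y # zs) ! Suc i))"
    by (subst sum.lessThan_Suc_shift) simp
  finally show ?case using 1 by simp
qed auto

lemma tsum_rs: "length ts = length xs - 1 \<Longrightarrow> rs_sum f g xs ts = tsum f g xs ts"
proof (induction f g xs ts rule: tsum.induct)
  case (1 f g x y zs t ts)
  have "rs_sum f g (x # y # zs) (t # ts) = (\<Sum>i<Suc (length ts). (f ((t#ts) ! i)) * (g ((x # y # zs) ! Suc i) - g ((x # y # zs) ! i)))"
    by (simp add: rs_sum_def)
  also have "\<dots> = f t * (g y - g x) + rs_sum f g (y # zs) ts"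
    by (subst sum.lessThan_Suc_shift) (simp add: rs_sum_def)
  finally show ?case using 1 by simp
next
  case ("2_1" f g ts) then show ?case by (simp add: rs_sum_def)
next
  case ("2_2" f g x ts) then show ?case by (simp add: rs_sum_def)
qed (auto simp: rs_sum_def)

lemma tagok_iff: "xs \<noteq> [] \<Longrightarrow> tagok xs ts \<longleftrightarrow> length ts = length xs - 1 \<and>
     (\<forall>i < length ts. xs ! i \<le> ts ! i \<and> ts ! i \<le> xs ! Suc i)"
proof (induction xs ts rule: tagok.induct)
  case (1 x y zs t ts)
  show ?case
  proof
    assume "tagok (x # y # zs) (t # ts)"
    then show "length (t # ts) = length (x # y # zs) - 1 \<and>
      (\<forall>i<length (t # ts). (x # y # zs) ! i \<le> (t # ts) ! i \<and> (t # ts) ! i \<le> (x # y # zs) ! Suc i)"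
      using 1 by (auto simp: less_Suc_eq_0_disj)
  next
    assume H: "length (t # ts) = length (x # y # zs) - 1 \<and>
      (\<forall>i<length (t # ts). (x # y # zs) ! i \<le> (t # ts) ! i \<and> (t # ts) ! i \<le> (x # y # zs) ! Suc i)"
    then have "x \<le> t \<and> t \<le> y" by fastforce
    moreover have "tagok (y # zs) ts" using 1 H by fastforce
    ultimately show "tagok (x # y # zs) (t # ts)" by simp
  qed
qed auto

lemma sorted_lt_Cons2: "sorted_wrt (<) (x # y # zs) \<longleftrightarrow> (x < (y::real) \<and> sorted_wrt (<) (y # zs))"
  by (auto intro: less_trans)

lemma is_partition_Cons2: "is_partition (x # y # zs) a b \<longleftrightarrow>
    x = a \<and> x < y \<and> (if zs = [] then y = b else is_partition (y # zs) y b)"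
  unfolding is_partition_def sorted_lt_Cons2 by (cases zs) auto

lemma is_partition_two: "is_partition [a, b] a' b' \<longleftrightarrow> a = a' \<and> b = b' \<and> a < b"
  by (auto simp: is_partition_def)

lemma is_partition_shape: "is_partition xs a b \<Longrightarrow> \<exists>y zs. xs = a # y # zs"
  unfolding is_partition_def by (cases xs; cases "tl xs") auto

lemma allpairs_mono: "allpairs P xs \<Longrightarrow> (\<And>x y. P x y \<Longrightarrow> Q x y) \<Longrightarrow> allpairs Q xs"
  by (induction P xs rule: allpairs.induct) auto

lemma is_partition_lt_aux: "is_partition (x # zs) a b \<Longrightarrow> a < b \<and> set (x # zs) \<subseteq> {a..b} \<and>
   allpairs (\<lambda>u v. a \<le> u \<and> u < v \<and> v \<le> b) (x # zs)"
proof (induction zs arbitrary: x a)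
  case Nil
  then show ?case by (simp add: is_partition_def)
next
  case (Cons y zs)
  show ?case
  proof (cases zs)
    case Nil
    then show ?thesis using Cons.prems by (simp add: is_partition_two)
  next
    case (Cons z zs')
    have "x = a" "a < y" "is_partition (y # zs) y b"
      using Cons.prems \<open>zs = z # zs'\<close> by (auto simp: is_partition_Cons2)
    with Cons.IH[of y y] show ?thesis
      by (auto elim!: allpairs_mono)
  qed
qed

lemma is_partition_lt: "is_partition xs a b \<Longrightarrow> a < b"
proof -
  assume H: "is_partition xs a b"
  then obtain y zs where "xs = a # y # zs" using is_partition_shape by blast
  then show ?thesis using is_partition_lt_aux[of a "y # zs" a b] H by simp
qed

lemma is_partition_set: "is_partition xs a b \<Longrightarrow> set xs \<subseteq> {a..b}"
proof -
  assume H: "is_partition xs a b"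
  then obtain y zs where "xs = a # y # zs" using is_partition_shape by blast
  then show ?thesis using is_partition_lt_aux[of a "y # zs" a b] H by simp
qed

lemma mesh_lt_iff: assumes "\<delta> > 0" shows "mesh xs < \<delta> \<longleftrightarrow> allpairs (\<lambda>x y. y - x < \<delta>) xs"
proof -
  have fin: "finite {xs ! Suc i - xs ! i | i. Suc i < length xs}"
    by (rule finite_subset[of _ "(\<lambda>i. xs ! Suc i - xs ! i) ` {..<length xs}"]) auto
  have "mesh xs < \<delta> \<longleftrightarrow> (\<forall>i. Suc i < length xs \<longrightarrow> xs ! Suc i - xs ! i < \<delta>)"
    unfolding mesh_def using fin assms by (auto simp: Max_less_iff)
  also have "\<dots> \<longleftrightarrow> allpairs (\<lambda>x y. y - x < \<delta>) xs"
  proof (induction "\<lambda>x y::real. y - x < \<delta>" xs rule: allpairs.induct)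
    case (1 x y zs)
    then show ?case by (auto simp: less_Suc_eq_0_disj)
  qed auto
  finally show ?thesis .
qed

lemma allpairs_conj: "allpairs (\<lambda>x y. P x y \<and> Q x y) xs \<longleftrightarrow> allpairs P xs \<and> allpairs Q xs"
  by (induction xs rule: induct_list012) auto

lemma partition_pairs: "is_partition xs a b \<Longrightarrow> allpairs (\<lambda>x y. a \<le> x \<and> x < y \<and> y \<le> b) xs"
proof -
  assume H: "is_partition xs a b"
  then obtain y zs where "xs = a # y # zs" using is_partition_shape by blast
  then show ?thesis using is_partition_lt_aux[of a "y # zs" a b] H by simp
qed

lemma tagged_iff: "is_tagged_partition xs ts a b \<longleftrightarrow> is_partition xs a b \<and> tagok xs ts"
proof (cases "xs = []")
  case True
  then show ?thesis by (simp add: is_tagged_partition_def is_partition_def)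
next
  case False
  then show ?thesis unfolding is_tagged_partition_def using tagok_iff[OF False] by blast
qed

lemma rs_sum_tsum: "is_tagged_partition xs ts a b \<Longrightarrow> rs_sum f g xs ts = tsum f g xs ts"
  by (simp add: is_tagged_partition_def tsum_rs)

lemma has_rs_integral_iff: "has_rs_integral f g a b I \<longleftrightarrow>
  (\<forall>\<epsilon>>0. \<exists>\<delta>>0. \<forall>xs ts. is_partition xs a b \<and> tagok xs ts \<and> allpairs (\<lambda>x y. y - x < \<delta>) xs \<longrightarrow>
        \<bar>tsum f g xs ts - I\<bar> < \<epsilon>)" (is "?L \<longleftrightarrow> ?R")
proof -
  have pw: "\<And>\<delta> xs ts. \<delta> > 0 \<Longrightarrow> (is_tagged_partition xs ts a b \<and> mesh xs < \<delta>) =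
     (is_partition xs a b \<and> tagok xs ts \<and> allpairs (\<lambda>x y. y - x < \<delta>) xs)"
    using mesh_lt_iff tagged_iff by blast
  show ?thesis
  proof
    assume L: ?L
    show ?R
    proof (intro allI impI)
      fix \<epsilon> :: real assume "\<epsilon> > 0"
      then obtain \<delta> where d: "\<delta> > 0" "\<And>xs ts. is_tagged_partition xs ts a b \<and> mesh xs < \<delta> \<Longrightarrow>
        \<bar>rs_sum f g xs ts - I\<bar> < \<epsilon>" using L unfolding has_rs_integral_def by blast
      show "\<exists>\<delta>>0. \<forall>xs ts. is_partition xs a b \<and> tagok xs ts \<and> allpairs (\<lambda>x y. y - x < \<delta>) xs \<longrightarrow>
        \<bar>tsum f g xs ts - I\<bar> < \<epsilon>"
      proof (intro exI[of _ \<delta>] conjI allI impI)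
        fix xs ts assume H: "is_partition xs a b \<and> tagok xs ts \<and> allpairs (\<lambda>x y. y - x < \<delta>) xs"
        then have T: "is_tagged_partition xs ts a b \<and> mesh xs < \<delta>" using pw[OF d(1)] by blast
        show "\<bar>tsum f g xs ts - I\<bar> < \<epsilon>" using d(2)[OF T] rs_sum_tsum[of xs ts a b f g] T by simp
      qed (rule d(1))
    qed
  next
    assume R: ?R
    show ?L unfolding has_rs_integral_def
    proof (intro allI impI)
      fix \<epsilon> :: real assume "\<epsilon> > 0"
      then obtain \<delta> where d: "\<delta> > 0" "\<And>xs ts. is_partition xs a b \<and> tagok xs ts \<and> allpairs (\<lambda>x y. y - x < \<delta>) xs \<Longrightarrow>
        \<bar>tsum f g xs ts - I\<bar> < \<epsilon>" using R by blast
      show "\<exists>\<delta>>0. \<forall>xs ts. is_tagged_partition xs ts a b \<and> mesh xs < \<delta> \<longrightarrow>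
        \<bar>rs_sum f g xs ts - I\<bar> < \<epsilon>"
      proof (intro exI[of _ \<delta>] conjI allI impI)
        fix xs ts assume T: "is_tagged_partition xs ts a b \<and> mesh xs < \<delta>"
        then have H: "is_partition xs a b \<and> tagok xs ts \<and> allpairs (\<lambda>x y. y - x < \<delta>) xs" using pw[OF d(1)] by blast
        show "\<bar>rs_sum f g xs ts - I\<bar> < \<epsilon>" using d(2)[OF H] rs_sum_tsum[of xs ts a b f g] T by simp
      qed (rule d(1))
    qed
  qed
qed


lemma psum_append: "psum F (xs @ c # ys) = psum F (xs @ [c]) + psum F (c # ys)"
proof (induction xs rule: induct_list012)
  case (3 x y zs)
  then show ?case by simp
qed auto

lemma tsum_append: "length ts1 = length xs \<Longrightarrow>
  tsum f g (xs @ c # ys) (ts1 @ ts2) = tsum f g (xs @ [c]) ts1 + tsum f g (c # ys) ts2"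
proof (induction xs arbitrary: ts1 rule: induct_list012)
  case 1 then show ?case by simp
next
  case (2 x) then show ?case by (cases ts1) auto
next
  case (3 x y zs)
  then obtain t ts where "ts1 = t # ts" by (cases ts1) auto
  with 3 show ?case by simp
qed

lemma tagok_append: "tagok (xs @ [c]) ts1 \<Longrightarrow> tagok (c # ys) ts2 \<Longrightarrow> tagok (xs @ c # ys) (ts1 @ ts2)"
proof (induction xs arbitrary: ts1 rule: induct_list012)
  case 1 then show ?case by (cases ts1) auto
next
  case (2 x) then show ?case by (cases ts1; cases "tl ts1") auto
next
  case (3 x y zs)
  then obtain t ts where "ts1 = t # ts" by (cases ts1) auto
  with 3 show ?case by simp
qed

lemma tagok_length: "tagok xs ts \<Longrightarrow> length ts = length xs - 1"
  by (induction xs ts rule: tagok.induct) auto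

lemma allpairs_append: "allpairs P (xs @ c # ys) \<longleftrightarrow> allpairs P (xs @ [c]) \<and> allpairs P (c # ys)"
proof (induction xs rule: induct_list012)
  case (3 x y zs)
  then show ?case by simp
qed auto

lemma partition_append:
  assumes "is_partition (xs @ [c]) a c" "is_partition (c # ys) c b"
  shows "is_partition (xs @ c # ys) a b"
proof -
  have "xs \<noteq> []" using assms(1) by (auto simp: is_partition_def)
  moreover have "ys \<noteq> []" using assms(2) by (auto simp: is_partition_def)
  moreover have "\<forall>x\<in>set xs. \<forall>y\<in>set (c # ys). x < y"
  proof (intro ballI)
    fix x y assume "x \<in> set xs" "y \<in> set (c # ys)"
    have "x < c" using assms(1) \<open>x \<in> set xs\<close> by (auto simp: is_partition_def sorted_wrt_append)
    moreover have "c \<le> y" using assms(2) \<open>y \<in> set (c # ys)\<close> by (auto simp: is_partition_def)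
    ultimately show "x < y" by simp
  qed
  ultimately show ?thesis using assms
    by (auto simp: is_partition_def sorted_wrt_append)
qed

lemma partition_split:
  assumes "is_partition zs a b" "zs = xs @ c # ys"
  shows "a < c \<Longrightarrow> is_partition (xs @ [c]) a c"
    and "c < b \<Longrightarrow> is_partition (c # ys) c b"
    and "c = b \<Longrightarrow> ys = []"
    and "c = a \<Longrightarrow> xs = []"
proof -
  have s: "sorted_wrt (<) zs" "hd zs = a" "last zs = b" using assms(1) by (auto simp: is_partition_def)
  show "a < c \<Longrightarrow> is_partition (xs @ [c]) a c"
    using s assms(2) by (cases xs) (auto simp: is_partition_def sorted_wrt_append)
  show "c < b \<Longrightarrow> is_partition (c # ys) c b"
    using s assms(2) by (cases ys rule: rev_cases) (auto simp: is_partition_def sorted_wrt_append)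
  show "c = b \<Longrightarrow> ys = []"
    using s assms(2) by (cases ys rule: rev_cases) (auto simp: sorted_wrt_append)
  show "c = a \<Longrightarrow> xs = []"
    using s assms(2) by (cases xs) (auto simp: sorted_wrt_append)
qed

lemma exists_fine_partition_aux:
  fixes \<delta> :: real
  assumes "\<delta> > 0"
  shows "\<forall>a b. a < b \<and> b - a \<le> real n * (\<delta>/2) \<longrightarrow>
     (\<exists>xs. is_partition xs a b \<and> allpairs (\<lambda>x y. y - x < \<delta>) xs)"
proof (induction n)
  case 0 then show ?case by auto
next
  case (Suc n)
  show ?case
  proof (intro allI impI)
    fix a b :: real assume ab: "a < b \<and> b - a \<le> real (Suc n) * (\<delta>/2)"
    show "\<exists>xs. is_partition xs a b \<and> allpairs (\<lambda>x y. y - x < \<delta>) xs"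
    proof (cases "b - a < \<delta>")
      case True
      then show ?thesis using ab by (intro exI[of _ "[a,b]"]) (simp add: is_partition_two)
    next
      case False
      define c where "c = a + \<delta>/2"
      have "c < b" "b - c \<le> real n * (\<delta>/2)" using False ab assms
        by (auto simp: c_def algebra_simps)
      then obtain ys where ys: "is_partition ys c b" "allpairs (\<lambda>x y. y - x < \<delta>) ys"
        using Suc.IH by blast
      obtain y zs where "ys = c # y # zs" using is_partition_shape[OF ys(1)] by blast
      then show ?thesis using ys assms \<open>c < b\<close>
        by (intro exI[of _ "a # ys"]) (auto simp: is_partition_Cons2 c_def)
    qed
  qed
qed

lemma exists_fine_partition:
  fixes \<delta> :: real
  assumes "\<delta> > 0" "a < b"
  shows "\<exists>xs. is_partition xs a b \<and> allpairs (\<lambda>x y. y - x < \<delta>) xs"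
proof -
  obtain n where "(b - a) / (\<delta>/2) \<le> real n" using real_arch_simple by blast
  then have "b - a \<le> real n * (\<delta>/2)" using assms by (simp add: field_simps)
  then show ?thesis using exists_fine_partition_aux[OF assms(1), of n] assms by blast
qed

lemma tagok_butlast: "allpairs (\<lambda>x y. x \<le> y) xs \<Longrightarrow> xs \<noteq> [] \<Longrightarrow> tagok xs (butlast xs)"
proof (induction xs rule: induct_list012)
  case (3 x y zs) then show ?case by simp
qed auto

lemma tsum_butlast: "tsum f g xs (butlast xs) = psum (\<lambda>x y. f x * (g y - g x)) xs"
proof (induction xs rule: induct_list012)
  case (3 x y zs) then show ?case by simp
qed auto

lemma partition_tagok_butlast: "is_partition xs a b \<Longrightarrow> tagok xs (butlast xs)"
  apply (rule tagok_butlast)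
   apply (erule allpairs_mono[OF partition_pairs]; simp)
  apply (auto simp: is_partition_def)
  done

lemma exists_fine_tagged:
  fixes \<delta> :: real
  assumes "\<delta> > 0" "a < b"
  shows "\<exists>xs ts. is_partition xs a b \<and> tagok xs ts \<and> allpairs (\<lambda>x y. y - x < \<delta>) xs"
  using exists_fine_partition[OF assms] partition_tagok_butlast by blast

lemma tagok_set: "tagok xs ts \<Longrightarrow> t \<in> set ts \<Longrightarrow> \<exists>x\<in>set xs. \<exists>y\<in>set xs. x \<le> t \<and> t \<le> y"
  by (induction xs ts rule: tagok.induct) auto

lemma tags_in:
  assumes H: "is_partition xs a b" "tagok xs ts"
  shows "set ts \<subseteq> {a..b}"
proof
  fix t assume "t \<in> set ts"
  then obtain x y where "x \<in> set xs" "y \<in> set xs" "x \<le> t" "t \<le> y" using tagok_set H(2) by blast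
  moreover have "set xs \<subseteq> {a..b}" using is_partition_set[OF H(1)] .
  ultimately show "t \<in> {a..b}" by force
qed

lemma tsum_cong: "(\<And>t. t \<in> set ts \<Longrightarrow> f t = f' t) \<Longrightarrow> tsum f g xs ts = tsum f' g xs ts"
  by (induction f g xs ts rule: tsum.induct) auto

lemma tsum_add: "tsum (\<lambda>u. f1 u + f2 u) g xs ts = tsum f1 g xs ts + tsum f2 g xs ts"
  by (induction f1 g xs ts rule: tsum.induct) (auto simp: algebra_simps)

lemma tsum_zero: "tsum (\<lambda>u. 0) g xs ts = 0"
  by (induction "\<lambda>u::real. 0::real" g xs ts rule: tsum.induct) auto

lemma psum_telescope: "xs \<noteq> [] \<Longrightarrow> psum (\<lambda>x y. h y - h x) xs = h (last xs) - h (hd xs)"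
proof (induction xs rule: induct_list012)
  case (3 x y zs) then show ?case by simp
qed auto

lemma psum_abs_le: "allpairs (\<lambda>x y. \<bar>F x y\<bar> \<le> G x y) xs \<Longrightarrow> \<bar>psum F xs\<bar> \<le> psum G xs"
proof (induction xs rule: induct_list012)
  case (3 x y zs) then show ?case by (simp add: abs_triangle_ineq order_trans[OF abs_triangle_ineq] add_mono)
qed auto

lemma psum_le: "allpairs (\<lambda>x y. F x y \<le> G x y) xs \<Longrightarrow> psum F xs \<le> psum G xs"
proof (induction xs rule: induct_list012)
  case (3 x y zs) then show ?case by (simp add: add_mono)
qed auto

lemma psum_nonneg: "allpairs (\<lambda>x y. 0 \<le> G x y) xs \<Longrightarrow> 0 \<le> psum G xs"
proof (induction xs rule: induct_list012)
  case (3 x y zs) then show ?case by simp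
qed auto

lemma psum_add: "psum (\<lambda>x y. F x y + G x y) xs = psum F xs + psum G xs"
  by (induction xs rule: induct_list012) auto

lemma psum_diff: "psum (\<lambda>x y. F x y - G x y) xs = psum F xs - psum G xs"
  by (induction xs rule: induct_list012) auto

lemma psum_cmult: "psum (\<lambda>x y. c * F x y) xs = c * psum F xs"
  by (induction xs rule: induct_list012) (auto simp: algebra_simps)

lemma psum_abs_nonneg: "0 \<le> psum (\<lambda>x y. \<bar>g y - g x\<bar>) xs"
  by (rule psum_nonneg) (induction xs rule: induct_list012, auto)


definition vsum :: "(real \<Rightarrow> real) \<Rightarrow> real list \<Rightarrow> real" where
  "vsum g xs = psum (\<lambda>x y. \<bar>g y - g x\<bar>) xs"

definition var :: "(real \<Rightarrow> real) \<Rightarrow> real \<Rightarrow> real \<Rightarrow> real" where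
  "var g c d = (if c < d then Sup (vsum g ` {xs. is_partition xs c d}) else 0)"

lemma vsum_nonneg: "0 \<le> vsum g xs"
  unfolding vsum_def by (rule psum_abs_nonneg)

lemma bv_iff: "bounded_variation_on g a b \<longleftrightarrow> (\<exists>B. \<forall>xs. is_partition xs a b \<longrightarrow> vsum g xs \<le> B)"
  unfolding bounded_variation_on_def vsum_def psum_sum[symmetric] real_norm_def ..

lemma ext_left: "is_partition P c d \<Longrightarrow> a < c \<Longrightarrow> is_partition (a # P) a d \<and> vsum g P \<le> vsum g (a # P)"
proof -
  assume P: "is_partition P c d" and ac: "a < c"
  obtain y zs where "P = c # y # zs" using is_partition_shape[OF P] by blast
  then show ?thesis using P ac
    by (cases zs) (auto simp: is_partition_Cons2 vsum_def)
qed

lemma ext_right: "is_partition P c d \<Longrightarrow> d < b \<Longrightarrow> is_partition (P @ [b]) c b \<and> vsum g P \<le> vsum g (P @ [b])"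
proof -
  assume P: "is_partition P c d" and db: "d < b"
  have "P \<noteq> []" using P by (auto simp: is_partition_def)
  moreover have "last P = d" using P by (simp add: is_partition_def)
  ultimately have "P = butlast P @ [d]" by (metis append_butlast_last_id)
  then obtain Q where Q: "P = Q @ [d]" by blast
  have "is_partition (d # [b]) d b" using db by (simp add: is_partition_two)
  then have "is_partition (Q @ d # [b]) c b" using partition_append[of Q d c "[b]" b] P Q by simp
  moreover have "vsum g (Q @ d # [b]) = vsum g P + \<bar>g b - g d\<bar>"
    unfolding vsum_def by (subst psum_append) (simp add: Q)
  ultimately show ?thesis using Q by simp
qed

lemma bv_sub:
  fixes g :: "real \<Rightarrow> real"
  assumes "bounded_variation_on g a b" "a \<le> c" "d \<le> b"
  shows "bounded_variation_on g c d"
proof -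
  obtain B where B: "\<And>xs. is_partition xs a b \<Longrightarrow> vsum g xs \<le> B" using assms(1) bv_iff by blast
  have "vsum g P \<le> B" if P: "is_partition P c d" for P
  proof -
    obtain P1 where P1: "is_partition P1 a d" "vsum g P \<le> vsum g P1"
    proof (cases "a < c")
      case True then show ?thesis using ext_left[OF P True] that by blast
    next
      case False then have "a = c" using assms by simp
      then show ?thesis using that P by blast
    qed
    obtain P2 where P2: "is_partition P2 a b" "vsum g P1 \<le> vsum g P2"
    proof (cases "d < b")
      case True then show ?thesis using ext_right[OF P1(1) True] that by blast
    next
      case False then have "d = b" using assms by simp
      then show ?thesis using that P1 by blast
    qed
    show ?thesis using B[OF P2(1)] P1 P2 by simp
  qed
  then show ?thesis using bv_iff by blast
qed

lemma bdd_vsum: "bounded_variation_on g c d \<Longrightarrow> bdd_above (vsum g ` {xs. is_partition xs c d})"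
  using bv_iff by (auto simp: bdd_above_def)

lemma var_ge:
  assumes "bounded_variation_on g a b" "a \<le> c" "d \<le> b" "is_partition P c d"
  shows "vsum g P \<le> var g c d"
proof -
  have "c < d" using is_partition_lt[OF assms(4)] .
  have "bounded_variation_on g c d" using bv_sub assms by blast
  then show ?thesis unfolding var_def using \<open>c < d\<close> assms(4)
    by (auto intro!: cSUP_upper bdd_vsum)
qed

lemma var_nonneg:
  assumes "bounded_variation_on g a b" "a \<le> c" "d \<le> b"
  shows "0 \<le> var g c d"
proof (cases "c < d")
  case True
  then have "is_partition [c, d] c d" by (simp add: is_partition_two)
  then show ?thesis using var_ge[OF assms] vsum_nonneg order_trans by blast
qed (simp add: var_def)

lemma var_diff:
  assumes "bounded_variation_on g a b" "a \<le> c" "c \<le> d" "d \<le> b"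
  shows "\<bar>g d - g c\<bar> \<le> var g c d"
proof (cases "c < d")
  case True
  then have "is_partition [c, d] c d" by (simp add: is_partition_two)
  from var_ge[OF assms(1,2,4) this] show ?thesis by (simp add: vsum_def)
next
  case False then show ?thesis using assms by (simp add: var_def)
qed

lemma var_super:
  assumes "bounded_variation_on g a b" "a \<le> c" "c \<le> m" "m \<le> d" "d \<le> b"
  shows "var g c m + var g m d \<le> var g c d"
proof (cases "c < m \<and> m < d")
  case False
  then show ?thesis using assms by (auto simp: var_def)
next
  case True
  have key: "vsum g P1 + vsum g P2 \<le> var g c d"
    if P1: "is_partition P1 c m" and P2: "is_partition P2 m d" for P1 P2
  proof -
    have "P1 \<noteq> []" "last P1 = m" using P1 by (auto simp: is_partition_def)
    then have "P1 = butlast P1 @ [m]" by (metis append_butlast_last_id)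
    then obtain Q where Q: "P1 = Q @ [m]" by blast
    obtain R where R: "P2 = m # R" using is_partition_shape[OF P2] by blast
    have "is_partition (Q @ m # R) c d" using partition_append[of Q m c R d] P1 P2 Q R by simp
    moreover have "vsum g (Q @ m # R) = vsum g P1 + vsum g P2"
      unfolding vsum_def by (subst psum_append) (simp add: Q R)
    ultimately show ?thesis using var_ge[OF assms(1,2,5), of "Q @ m # R"] by simp
  qed
  have ne1: "{xs. is_partition xs c m} \<noteq> {}" using True by (auto simp: is_partition_two intro!: exI[of _ "[c,m]"])
  have ne2: "{xs. is_partition xs m d} \<noteq> {}" using True by (auto simp: is_partition_two intro!: exI[of _ "[m,d]"])
  have "var g c m \<le> var g c d - vsum g P2" if P2: "is_partition P2 m d" for P2
  proof -
    have "var g c m = Sup (vsum g ` {xs. is_partition xs c m})" using True by (simp add: var_def)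
    also have "\<dots> \<le> var g c d - vsum g P2"
      by (rule cSUP_least[OF ne1]) (use key[OF _ P2] in force)
    finally show ?thesis .
  qed
  then have "var g m d \<le> var g c d - var g c m"
  proof -
    assume H: "\<And>P2. is_partition P2 m d \<Longrightarrow> var g c m \<le> var g c d - vsum g P2"
    have "var g m d = Sup (vsum g ` {xs. is_partition xs m d})" using True by (simp add: var_def)
    also have "\<dots> \<le> var g c d - var g c m"
      by (rule cSUP_least[OF ne2]) (use H in force)
    finally show ?thesis .
  qed
  then show ?thesis by simp
qed

lemma var_mono:
  assumes "bounded_variation_on g a b" "a \<le> c" "c \<le> d" "d \<le> b"
  shows "var g c d \<le> var g a b"
proof -
  have "var g a c + var g c d \<le> var g a d" using var_super[OF assms(1), of a c d] assms by simp
  moreover have "var g a d + var g d b \<le> var g a b" using var_super[OF assms(1), of a d b] assms by simp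
  moreover have "0 \<le> var g a c" "0 \<le> var g d b" using var_nonneg[OF assms(1)] assms by auto
  ultimately show ?thesis by linarith
qed

lemma var_psum:
  assumes "bounded_variation_on g A B"
  shows "is_partition (x # zs) a b \<Longrightarrow> A \<le> a \<Longrightarrow> b \<le> B \<Longrightarrow> psum (var g) (x # zs) \<le> var g a b"
proof (induction zs arbitrary: x a)
  case Nil
  then show ?case by (simp add: is_partition_def)
next
  case (Cons y zs)
  show ?case
  proof (cases zs)
    case Nil
    then show ?thesis using Cons.prems by (simp add: is_partition_two)
  next
    case (Cons z zs')
    have xa: "x = a" "a < y" "is_partition (y # zs) y b"
      using Cons.prems \<open>zs = z # zs'\<close> by (auto simp: is_partition_Cons2)
    have "y \<le> b" using is_partition_lt[OF xa(3)] by simp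
    have "psum (var g) (y # zs) \<le> var g y b" using Cons.IH[OF xa(3)] Cons.prems xa by simp
    moreover have "var g a y + var g y b \<le> var g a b"
      using var_super[OF assms, of a y b] Cons.prems xa \<open>y \<le> b\<close> by simp
    ultimately show ?thesis using xa by simp
  qed
qed

lemma var_psum':
  assumes "bounded_variation_on g a b" "is_partition xs a b"
  shows "psum (var g) xs \<le> var g a b"
proof -
  obtain y zs where "xs = a # y # zs" using is_partition_shape[OF assms(2)] by blast
  then show ?thesis using var_psum[OF assms(1), of a "y # zs" a b] assms(2) by simp
qed


lemma rs_unique:
  assumes "a < b" "has_rs_integral f g a b I" "has_rs_integral f g a b J"
  shows "I = J"
proof (rule ccontr)
  assume "I \<noteq> J"
  define e where "e = \<bar>I - J\<bar> / 2"
  have e: "e > 0" using \<open>I \<noteq> J\<close> by (simp add: e_def)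
  obtain d1 where d1: "d1 > 0" "\<And>xs ts. is_partition xs a b \<and> tagok xs ts \<and> allpairs (\<lambda>x y. y - x < d1) xs \<Longrightarrow>
        \<bar>tsum f g xs ts - I\<bar> < e" using assms(2) e unfolding has_rs_integral_iff by blast
  obtain d2 where d2: "d2 > 0" "\<And>xs ts. is_partition xs a b \<and> tagok xs ts \<and> allpairs (\<lambda>x y. y - x < d2) xs \<Longrightarrow>
        \<bar>tsum f g xs ts - J\<bar> < e" using assms(3) e unfolding has_rs_integral_iff by blast
  obtain xs ts where P: "is_partition xs a b" "tagok xs ts" "allpairs (\<lambda>x y. y - x < min d1 d2) xs"
    using exists_fine_tagged[of "min d1 d2" a b] d1 d2 assms(1) by auto
  have "\<bar>tsum f g xs ts - I\<bar> < e" using d1(2) P allpairs_mono[OF P(3)] by simp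
  moreover have "\<bar>tsum f g xs ts - J\<bar> < e" using d2(2) P allpairs_mono[OF P(3)] by simp
  ultimately have "\<bar>I - J\<bar> < 2 * e" by arith
  then show False unfolding e_def by simp
qed

lemma rs_integral_eq: "a < b \<Longrightarrow> has_rs_integral f g a b I \<Longrightarrow> rs_integral f g a b = I"
  unfolding rs_integral_def using rs_unique by (auto intro!: the_equality)

lemma block_est:
  assumes "is_partition zs c d" "c \<le> t" "t \<le> d" "\<And>u. u \<in> {c..d} \<Longrightarrow> \<bar>f t - f u\<bar> \<le> \<omega>"
  shows "\<bar>f t * (g d - g c) - psum (\<lambda>x y. f x * (g y - g x)) zs\<bar> \<le> \<omega> * vsum g zs"
proof -
  have ne: "zs \<noteq> []" "hd zs = c" "last zs = d" using assms(1) by (auto simp: is_partition_def)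
  have "f t * (g d - g c) = f t * psum (\<lambda>x y. g y - g x) zs" using psum_telescope[OF ne(1)] ne by simp
  also have "\<dots> = psum (\<lambda>x y. f t * (g y - g x)) zs" by (simp add: psum_cmult)
  finally have "f t * (g d - g c) - psum (\<lambda>x y. f x * (g y - g x)) zs
     = psum (\<lambda>x y. (f t - f x) * (g y - g x)) zs" by (simp add: psum_diff[symmetric] algebra_simps)
  also have "\<bar>\<dots>\<bar> \<le> psum (\<lambda>x y. \<omega> * \<bar>g y - g x\<bar>) zs"
  proof (rule psum_abs_le)
    show "allpairs (\<lambda>x y. \<bar>(f t - f x) * (g y - g x)\<bar> \<le> \<omega> * \<bar>g y - g x\<bar>) zs"
    proof (rule allpairs_mono[OF partition_pairs[OF assms(1)]])
      fix x y assume "c \<le> x \<and> x < y \<and> y \<le> d"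
      then have "\<bar>f t - f x\<bar> \<le> \<omega>" using assms(4) by auto
      then show "\<bar>(f t - f x) * (g y - g x)\<bar> \<le> \<omega> * \<bar>g y - g x\<bar>"
        by (simp add: abs_mult mult_right_mono)
    qed
  qed
  also have "\<dots> = \<omega> * vsum g zs" by (simp add: psum_cmult vsum_def)
  finally show ?thesis .
qed

lemma sorted_lt_hd: "sorted_wrt (<) (z # zs) \<Longrightarrow> w \<in> set (z # zs) \<Longrightarrow> (z::real) \<le> w"
  by auto

lemma sorted_lt_last: "sorted_wrt (<) zs \<Longrightarrow> w \<in> set zs \<Longrightarrow> (w::real) \<le> last zs"
  by (induction zs rule: rev_induct) (auto simp: sorted_wrt_append)

lemma refine:
  assumes "is_partition (x # xs) a b" "tagok (x # xs) ts" "is_partition ys a b" "set (x # xs) \<subseteq> set ys"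
    "allpairs (\<lambda>u v. \<forall>t\<in>{u..v}. \<forall>w\<in>{u..v}. \<bar>f t - f w\<bar> \<le> \<omega>) (x # xs)"
  shows "\<bar>tsum f g (x # xs) ts - psum (\<lambda>x y. f x * (g y - g x)) ys\<bar> \<le> \<omega> * vsum g ys"
  using assms
proof (induction xs arbitrary: x a ts ys)
  case Nil
  then show ?case by (simp add: is_partition_def)
next
  case (Cons y zs)
  obtain t ts' where ts: "ts = t # ts'" using Cons.prems(2) by (cases ts) auto
  have xa: "x = a" "a < y" using Cons.prems(1) by (auto simp: is_partition_Cons2)
  have t: "x \<le> t" "t \<le> y" "tagok (y # zs) ts'" using Cons.prems(2) ts by auto
  have osc: "\<And>u. u \<in> {x..y} \<Longrightarrow> \<bar>f t - f u\<bar> \<le> \<omega>" using Cons.prems(5) t by auto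
  have "y \<in> set ys" using Cons.prems(4) by auto
  then obtain ys1 ys2 where ysplit: "ys = ys1 @ y # ys2" by (meson split_list)
  have P1: "is_partition (ys1 @ [y]) a y" by (rule partition_split(1)[OF Cons.prems(3) ysplit xa(2)])
  define F where "F = (\<lambda>x y. f x * (g y - g x))"
  have psplit: "psum F ys = psum F (ys1 @ [y]) + psum F (y # ys2)"
    unfolding ysplit by (rule psum_append)
  have vsplit: "vsum g ys = vsum g (ys1 @ [y]) + vsum g (y # ys2)"
    unfolding ysplit vsum_def by (rule psum_append)
  have B1: "\<bar>f t * (g y - g x) - psum F (ys1 @ [y])\<bar> \<le> \<omega> * vsum g (ys1 @ [y])"
    unfolding F_def using block_est[OF P1, of t f \<omega> g] t osc xa by auto
  show ?case
  proof (cases zs)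
    case Nil
    then have "y = b" using Cons.prems(1) by (simp add: is_partition_two)
    then have "ys2 = []" using partition_split(3)[OF Cons.prems(3) ysplit] by simp
    then show ?thesis using B1 Nil ts psplit vsplit by (simp add: F_def vsum_def)
  next
    case (Cons z zs')
    have Pr: "is_partition (y # zs) y b" using Cons.prems(1) \<open>zs = z # zs'\<close> by (auto simp: is_partition_Cons2)
    have yb: "y < b" using is_partition_lt[OF Pr] .
    have P2: "is_partition (y # ys2) y b" using partition_split(2)[OF Cons.prems(3) ysplit yb] .
    have sub: "set (y # zs) \<subseteq> set (y # ys2)"
    proof
      fix w assume w: "w \<in> set (y # zs)"
      show "w \<in> set (y # ys2)"
      proof (cases "w = y")
        case False
        then have "w \<in> set zs" using w by simp
        then have "y < w" using Cons.prems(1) unfolding is_partition_def by auto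
        moreover have "w \<in> set ys" using Cons.prems(4) \<open>w \<in> set zs\<close> by auto
        moreover have "\<forall>u\<in>set ys1. u < y" using Cons.prems(3) ysplit
          unfolding is_partition_def by (auto simp: sorted_wrt_append)
        ultimately show ?thesis using ysplit by auto
      qed simp
    qed
    have osc2: "allpairs (\<lambda>u v. \<forall>t\<in>{u..v}. \<forall>w\<in>{u..v}. \<bar>f t - f w\<bar> \<le> \<omega>) (y # zs)"
      using Cons.prems(5) by simp
    have IH: "\<bar>tsum f g (y # zs) ts' - psum F (y # ys2)\<bar> \<le> \<omega> * vsum g (y # ys2)"
      using Cons.IH[OF Pr t(3) P2 sub osc2] by (simp add: F_def)
    have "tsum f g (x # y # zs) ts = f t * (g y - g x) + tsum f g (y # zs) ts'" using ts by simp
    then show ?thesis using IH B1 psplit vsplit unfolding F_def[symmetric]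
      by (simp add: algebra_simps)
  qed
qed

lemma union_partition:
  assumes "is_partition xs a b" "is_partition ys a b"
  shows "is_partition (sorted_list_of_set (set xs \<union> set ys)) a b"
proof -
  define Z where "Z = set xs \<union> set ys"
  define zs where "zs = sorted_list_of_set Z"
  have fin: "finite Z" by (simp add: Z_def)
  have sz: "set zs = Z" using fin by (simp add: zs_def)
  have st: "sorted_wrt (<) zs" unfolding zs_def by (rule strict_sorted_list_of_set)
  have ab: "a \<in> Z" "b \<in> Z" "a < b" using assms(1) is_partition_lt[OF assms(1)]
    unfolding Z_def is_partition_def by (auto intro: hd_in_set last_in_set)
  have Zab: "Z \<subseteq> {a..b}" using is_partition_set assms unfolding Z_def by blast
  have len: "length zs \<ge> 2"
  proof -
    have "distinct zs" using st by (simp add: strict_sorted_iff)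
    then have "length zs = card Z" using sz distinct_card by fastforce
    moreover have "card {a, b} \<le> card Z" using ab fin by (intro card_mono) auto
    ultimately show ?thesis using ab by simp
  qed
  then obtain z zs' where zz: "zs = z # zs'" by (cases zs) auto
  have "hd zs = a"
  proof -
    have "z \<le> a" using sorted_lt_hd[of z zs' a] st ab sz zz by auto
    moreover have "a \<le> z" using Zab sz zz by auto
    ultimately show ?thesis using zz by simp
  qed
  moreover have "last zs = b"
  proof -
    have "b \<le> last zs" using sorted_lt_last st ab sz by auto
    moreover have "last zs \<in> Z" using sz zz by (metis last_in_set list.distinct(1))
    then have "last zs \<le> b" using Zab by auto
    ultimately show ?thesis by simp
  qed
  ultimately show ?thesis using st len unfolding is_partition_def zs_def Z_def by simp
qed

lemma union_partition_sub:
  "set xs \<subseteq> set (sorted_list_of_set (set xs \<union> set ys))"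
  "set ys \<subseteq> set (sorted_list_of_set (set xs \<union> set ys))"
  by auto

lemma cont_bounded:
  assumes "continuous_on {a..b} (f :: real \<Rightarrow> real)"
  obtains M where "M \<ge> 0" "\<And>u. u \<in> {a..b} \<Longrightarrow> \<bar>f u\<bar> \<le> M"
proof -
  have "compact (f ` {a..b})" using compact_continuous_image[OF assms compact_Icc] .
  then obtain B where B: "\<forall>y\<in>f ` {a..b}. norm y \<le> B" using compact_imp_bounded bounded_iff by metis
  have "\<bar>f u\<bar> \<le> max B 0" if "u \<in> {a..b}" for u
  proof -
    have "norm (f u) \<le> B" using B that by blast
    then show ?thesis by simp
  qed
  then show ?thesis using that[of "max B 0"] by simp
qed

lemma fine_osc:
  assumes "is_partition xs a b" "allpairs (\<lambda>x y. y - x < \<delta>) xs"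
    "\<And>u w. u \<in> {a..b} \<Longrightarrow> w \<in> {a..b} \<Longrightarrow> \<bar>u - w\<bar> < \<delta> \<Longrightarrow> \<bar>f u - f w\<bar> \<le> \<omega>"
  shows "allpairs (\<lambda>u v. \<forall>t\<in>{u..v}. \<forall>w\<in>{u..v}. \<bar>f t - f w\<bar> \<le> \<omega>) xs"
proof -
  have "allpairs (\<lambda>x y. (a \<le> x \<and> x < y \<and> y \<le> b) \<and> y - x < \<delta>) xs"
    using partition_pairs[OF assms(1)] assms(2) by (simp add: allpairs_conj)
  then show ?thesis
  proof (rule allpairs_mono)
    fix u v assume H: "(a \<le> u \<and> u < v \<and> v \<le> b) \<and> v - u < \<delta>"
    show "\<forall>t\<in>{u..v}. \<forall>w\<in>{u..v}. \<bar>f t - f w\<bar> \<le> \<omega>"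
    proof (intro ballI)
      fix t w assume "t \<in> {u..v}" "w \<in> {u..v}"
      then show "\<bar>f t - f w\<bar> \<le> \<omega>" using H by (intro assms(3)) auto
    qed
  qed
qed

lemma rs_exists:
  assumes ab: "a < b" and f: "continuous_on {a..b} f" and g: "bounded_variation_on g a b"
  shows "\<exists>I. has_rs_integral f g a b I"
proof -
  obtain B where B: "\<And>P. is_partition P a b \<Longrightarrow> vsum g P \<le> B" using g bv_iff by blast
  have B0: "B \<ge> 0" using B[of "[a,b]"] ab vsum_nonneg[of g "[a,b]"] by (simp add: is_partition_two)
  have uc: "uniformly_continuous_on {a..b} f" using compact_uniformly_continuous[OF f compact_Icc] .
  define FP where "FP = (\<lambda>\<delta> xs ts. is_partition xs a b \<and> tagok xs ts \<and> allpairs (\<lambda>x y. y - x < \<delta>) xs)"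
  have C: "\<exists>\<delta>>0. \<forall>xs ts ys us. FP \<delta> xs ts \<and> FP \<delta> ys us \<longrightarrow> \<bar>tsum f g xs ts - tsum f g ys us\<bar> < \<epsilon>"
    if e: "\<epsilon> > 0" for \<epsilon>
  proof -
    define \<eta> where "\<eta> = \<epsilon> / (2 * (B + 1))"
    have eta: "\<eta> > 0" using e B0 by (simp add: \<eta>_def)
    obtain \<delta> where d: "\<delta> > 0" "\<And>u w. u \<in> {a..b} \<Longrightarrow> w \<in> {a..b} \<Longrightarrow> dist u w < \<delta> \<Longrightarrow> dist (f u) (f w) < \<eta>"
      using uc eta unfolding uniformly_continuous_on_def by metis
    have d': "\<And>u w. u \<in> {a..b} \<Longrightarrow> w \<in> {a..b} \<Longrightarrow> \<bar>u - w\<bar> < \<delta> \<Longrightarrow> \<bar>f u - f w\<bar> \<le> \<eta>"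
      using d(2) by (fastforce simp: dist_real_def)
    have one: "\<bar>tsum f g xs ts - psum (\<lambda>x y. f x * (g y - g x)) zs\<bar> \<le> \<eta> * B"
      if H: "FP \<delta> xs ts" "is_partition zs a b" "set xs \<subseteq> set zs" for xs ts zs
    proof -
      obtain y ws where xs: "xs = a # y # ws" using H(1) is_partition_shape unfolding FP_def by blast
      have osc: "allpairs (\<lambda>u v. \<forall>t\<in>{u..v}. \<forall>w\<in>{u..v}. \<bar>f t - f w\<bar> \<le> \<eta>) xs"
        using fine_osc[of xs a b \<delta> f \<eta>] H(1) d' unfolding FP_def by blast
      have "\<bar>tsum f g xs ts - psum (\<lambda>x y. f x * (g y - g x)) zs\<bar> \<le> \<eta> * vsum g zs"
        using refine[of a "y # ws" a b ts zs f \<eta> g] H osc xs unfolding FP_def by simp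
      also have "\<dots> \<le> \<eta> * B" using B[OF H(2)] eta by simp
      finally show ?thesis .
    qed
    show ?thesis
    proof (intro exI[of _ \<delta>] conjI allI impI)
      fix xs ts ys us assume H: "FP \<delta> xs ts \<and> FP \<delta> ys us"
      define zs where "zs = sorted_list_of_set (set xs \<union> set ys)"
      have zs: "is_partition zs a b" using union_partition H unfolding zs_def FP_def by blast
      have "\<bar>tsum f g xs ts - psum (\<lambda>x y. f x * (g y - g x)) zs\<bar> \<le> \<eta> * B"
        using one H zs unfolding zs_def by auto
      moreover have "\<bar>tsum f g ys us - psum (\<lambda>x y. f x * (g y - g x)) zs\<bar> \<le> \<eta> * B"
        using one H zs unfolding zs_def by auto
      moreover have "2 * (\<eta> * B) < \<epsilon>"
      proof -
        have "2 * (\<eta> * B) = \<epsilon> * (B / (B + 1))" using B0 by (simp add: \<eta>_def field_simps)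
        also have "\<dots> < \<epsilon> * 1" using B0 e by (intro mult_strict_left_mono) auto
        finally show ?thesis by simp
      qed
      ultimately show "\<bar>tsum f g xs ts - tsum f g ys us\<bar> < \<epsilon>" by linarith
    qed (rule d(1))
  qed
  have ex: "\<exists>xs ts. FP (1 / real (Suc n)) xs ts" for n
    using exists_fine_tagged[of "1 / real (Suc n)" a b] ab unfolding FP_def by simp
  define P where "P = (\<lambda>n. SOME p. FP (1 / real (Suc n)) (fst p) (snd p))"
  have P: "FP (1 / real (Suc n)) (fst (P n)) (snd (P n))" for n
    unfolding P_def using ex[of n] by (metis (mono_tags, lifting) fst_conv snd_conv someI)
  define s where "s = (\<lambda>n. tsum f g (fst (P n)) (snd (P n)))"
  have FPmono: "FP \<delta>' xs ts" if "FP \<delta> xs ts" "\<delta> \<le> \<delta>'" for \<delta> \<delta>' xs ts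
    using that unfolding FP_def by (auto elim!: allpairs_mono)
  have small: "\<exists>N. \<forall>n\<ge>N. 1 / real (Suc n) \<le> \<delta>" if "\<delta> > 0" for \<delta> :: real
  proof -
    obtain N where N: "1 / \<delta> < real N" using reals_Archimedean2 by blast
    have "1 / real (Suc n) \<le> \<delta>" if "n \<ge> N" for n
    proof -
      have "1 / \<delta> < real (Suc n)" using N that by linarith
      then show ?thesis using \<open>\<delta> > 0\<close> by (simp add: field_simps)
    qed
    then show ?thesis by blast
  qed
  have "Cauchy s"
  proof (rule CauchyI)
    fix e :: real assume "e > 0"
    obtain \<delta> where d: "\<delta> > 0" "\<And>xs ts ys us. FP \<delta> xs ts \<and> FP \<delta> ys us \<Longrightarrow> \<bar>tsum f g xs ts - tsum f g ys us\<bar> < e"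
      using C[OF \<open>e > 0\<close>] by blast
    obtain N where N: "\<And>n. n \<ge> N \<Longrightarrow> 1 / real (Suc n) \<le> \<delta>" using small[OF d(1)] by blast
    show "\<exists>M. \<forall>m\<ge>M. \<forall>n\<ge>M. norm (s m - s n) < e"
      using d(2) N FPmono P unfolding s_def real_norm_def by blast
  qed
  then obtain I where I: "s \<longlonglongrightarrow> I" using Cauchy_convergent_iff convergent_def by blast
  have "has_rs_integral f g a b I"
    unfolding has_rs_integral_iff
  proof (intro allI impI)
    fix e :: real assume "e > 0"
    then have e2: "e / 2 > 0" by simp
    obtain \<delta> where d: "\<delta> > 0" "\<And>xs ts ys us. FP \<delta> xs ts \<and> FP \<delta> ys us \<Longrightarrow> \<bar>tsum f g xs ts - tsum f g ys us\<bar> < e / 2"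
      using C[OF e2] by blast
    obtain N1 where N1: "\<And>n. n \<ge> N1 \<Longrightarrow> 1 / real (Suc n) \<le> \<delta>" using small[OF d(1)] by blast
    obtain N2 where N2: "\<And>n. n \<ge> N2 \<Longrightarrow> \<bar>s n - I\<bar> < e / 2"
      using I e2 unfolding LIMSEQ_iff real_norm_def by blast
    define n where "n = max N1 N2"
    have Pn: "FP \<delta> (fst (P n)) (snd (P n))" using FPmono[OF P N1] by (simp add: n_def)
    have sn: "\<bar>s n - I\<bar> < e / 2" using N2 by (simp add: n_def)
    show "\<exists>\<delta>>0. \<forall>xs ts. is_partition xs a b \<and> tagok xs ts \<and> allpairs (\<lambda>x y. y - x < \<delta>) xs \<longrightarrow>
        \<bar>tsum f g xs ts - I\<bar> < e"
    proof (intro exI[of _ \<delta>] conjI allI impI)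
      fix xs ts assume "is_partition xs a b \<and> tagok xs ts \<and> allpairs (\<lambda>x y. y - x < \<delta>) xs"
      then have "FP \<delta> xs ts" unfolding FP_def .
      then have "\<bar>tsum f g xs ts - s n\<bar> < e / 2" using d(2) Pn unfolding s_def by blast
      then show "\<bar>tsum f g xs ts - I\<bar> < e" using sn by linarith
    qed (rule d(1))
  qed
  then show ?thesis by blast
qed

lemma rs_has:
  assumes "a < b" "continuous_on {a..b} f" "bounded_variation_on g a b"
  shows "has_rs_integral f g a b (rs_integral f g a b)"
  using rs_exists[OF assms] rs_integral_eq[OF assms(1)] by metis


lemma tsum_minus_const: "tagok xs ts \<Longrightarrow>
  tsum (\<lambda>u. f u - c) g xs ts = tsum f g xs ts - c * (g (last xs) - g (hd xs))"
proof (induction xs ts rule: tagok.induct)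
  case (1 x y zs t ts)
  then show ?case by (simp add: algebra_simps)
qed auto

lemma tsum_abs_le: "tagok xs ts \<Longrightarrow> (\<And>t. t \<in> set ts \<Longrightarrow> \<bar>h t\<bar> \<le> \<omega>) \<Longrightarrow>
  \<bar>tsum h g xs ts\<bar> \<le> \<omega> * vsum g xs"
proof (induction xs ts rule: tagok.induct)
  case (1 x y zs t ts)
  have "\<bar>h t * (g y - g x)\<bar> \<le> \<omega> * \<bar>g y - g x\<bar>"
    using 1(3)[of t] by (simp add: abs_mult mult_right_mono)
  moreover have "\<bar>tsum h g (y # zs) ts\<bar> \<le> \<omega> * vsum g (y # zs)" using 1 by simp
  ultimately show ?case by (simp add: vsum_def algebra_simps)
qed (auto simp: vsum_def)

lemma rs_est:
  assumes ab: "a < b" and I: "has_rs_integral f g a b I" and g: "bounded_variation_on g a b"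
    and osc: "\<And>u. u \<in> {a..b} \<Longrightarrow> \<bar>f u - c\<bar> \<le> \<omega>"
  shows "\<bar>I - c * (g b - g a)\<bar> \<le> \<omega> * var g a b"
proof (rule field_le_epsilon)
  fix e :: real assume "e > 0"
  have w0: "\<omega> \<ge> 0" using osc[of a] ab by (meson abs_ge_zero atLeastAtMost_iff less_imp_le order_refl order_trans)
  obtain \<delta> where d: "\<delta> > 0" "\<And>xs ts. is_partition xs a b \<and> tagok xs ts \<and> allpairs (\<lambda>x y. y - x < \<delta>) xs \<Longrightarrow>
        \<bar>tsum f g xs ts - I\<bar> < e" using I \<open>e > 0\<close> unfolding has_rs_integral_iff by blast
  obtain xs ts where P: "is_partition xs a b" "tagok xs ts" "allpairs (\<lambda>x y. y - x < \<delta>) xs"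
    using exists_fine_tagged[OF d(1) ab] by blast
  have hl: "xs \<noteq> []" "hd xs = a" "last xs = b" using P(1) by (auto simp: is_partition_def)
  have "tsum (\<lambda>u. f u - c) g xs ts = tsum f g xs ts - c * (g b - g a)"
    using tsum_minus_const[OF P(2)] hl by simp
  moreover have "\<bar>tsum (\<lambda>u. f u - c) g xs ts\<bar> \<le> \<omega> * vsum g xs"
    by (rule tsum_abs_le[OF P(2)]) (use osc tags_in[OF P(1,2)] in auto)
  moreover have "\<omega> * vsum g xs \<le> \<omega> * var g a b"
    using var_ge[OF g order_refl order_refl P(1)] w0 by (simp add: mult_left_mono)
  moreover have "\<bar>tsum f g xs ts - I\<bar> < e" using d(2) P by blast
  ultimately show "\<bar>I - c * (g b - g a)\<bar> \<le> \<omega> * var g a b + e" by linarith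
qed

lemma cont_sub: "continuous_on {a..b} (f :: real \<Rightarrow> real) \<Longrightarrow> a \<le> c \<Longrightarrow> d \<le> b \<Longrightarrow> continuous_on {c..d} f"
  by (rule continuous_on_subset) auto

lemma rs_add_interval:
  assumes ac: "a < c" and cb: "c < b" and f: "continuous_on {a..b} f" and g: "bounded_variation_on g a b"
  shows "rs_integral f g a b = rs_integral f g a c + rs_integral f g c b"
proof -
  have ab: "a < b" using ac cb by simp
  define I where "I = rs_integral f g a b"
  define I1 where "I1 = rs_integral f g a c"
  define I2 where "I2 = rs_integral f g c b"
  have HI: "has_rs_integral f g a b I" unfolding I_def by (rule rs_has[OF ab f g])
  have HI1: "has_rs_integral f g a c I1" unfolding I1_def
    by (rule rs_has[OF ac cont_sub[OF f] bv_sub[OF g]]) (use cb in auto)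
  have HI2: "has_rs_integral f g c b I2" unfolding I2_def
    by (rule rs_has[OF cb cont_sub[OF f] bv_sub[OF g]]) (use ac in auto)
  have "\<bar>I - (I1 + I2)\<bar> \<le> 0 + e" if "e > 0" for e
  proof -
    have e3: "e / 3 > 0" using that by simp
    obtain d where d: "d > 0" "\<And>xs ts. is_partition xs a b \<and> tagok xs ts \<and> allpairs (\<lambda>x y. y - x < d) xs \<Longrightarrow>
        \<bar>tsum f g xs ts - I\<bar> < e / 3" using HI e3 unfolding has_rs_integral_iff by blast
    obtain d1 where d1: "d1 > 0" "\<And>xs ts. is_partition xs a c \<and> tagok xs ts \<and> allpairs (\<lambda>x y. y - x < d1) xs \<Longrightarrow>
        \<bar>tsum f g xs ts - I1\<bar> < e / 3" using HI1 e3 unfolding has_rs_integral_iff by blast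
    obtain d2 where d2: "d2 > 0" "\<And>xs ts. is_partition xs c b \<and> tagok xs ts \<and> allpairs (\<lambda>x y. y - x < d2) xs \<Longrightarrow>
        \<bar>tsum f g xs ts - I2\<bar> < e / 3" using HI2 e3 unfolding has_rs_integral_iff by blast
    define m where "m = min d (min d1 d2)"
    have m: "m > 0" using d d1 d2 by (simp add: m_def)
    obtain xs1 ts1 where P1: "is_partition xs1 a c" "tagok xs1 ts1" "allpairs (\<lambda>x y. y - x < m) xs1"
      using exists_fine_tagged[OF m ac] by blast
    obtain xs2 ts2 where P2: "is_partition xs2 c b" "tagok xs2 ts2" "allpairs (\<lambda>x y. y - x < m) xs2"
      using exists_fine_tagged[OF m cb] by blast
    have "xs1 \<noteq> []" "last xs1 = c" using P1(1) by (auto simp: is_partition_def)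
    then have "xs1 = butlast xs1 @ [c]" by (metis append_butlast_last_id)
    then obtain Q where Q: "xs1 = Q @ [c]" by blast
    obtain R where R: "xs2 = c # R" using is_partition_shape[OF P2(1)] by blast
    have len: "length ts1 = length Q" using tagok_length[OF P1(2)] Q by simp
    have PP: "is_partition (Q @ c # R) a b" using partition_append[of Q c a R b] P1(1) P2(1) Q R by simp
    have TT: "tagok (Q @ c # R) (ts1 @ ts2)" using tagok_append[of Q c ts1 R ts2] P1(2) P2(2) Q R by simp
    have FF: "allpairs (\<lambda>x y. y - x < m) (Q @ c # R)" unfolding allpairs_append[of _ Q c R] using P1(3) P2(3) Q R by simp
    have S: "tsum f g (Q @ c # R) (ts1 @ ts2) = tsum f g xs1 ts1 + tsum f g xs2 ts2"
      using tsum_append[OF len] Q R by simp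
    have "\<bar>tsum f g (Q @ c # R) (ts1 @ ts2) - I\<bar> < e / 3"
      using d(2)[of "Q @ c # R" "ts1 @ ts2"] PP TT allpairs_mono[OF FF] by (simp add: m_def)
    moreover have "\<bar>tsum f g xs1 ts1 - I1\<bar> < e / 3"
      using d1(2)[of xs1 ts1] P1 allpairs_mono[OF P1(3)] by (simp add: m_def)
    moreover have "\<bar>tsum f g xs2 ts2 - I2\<bar> < e / 3"
      using d2(2)[of xs2 ts2] P2 allpairs_mono[OF P2(3)] by (simp add: m_def)
    ultimately show ?thesis using S by linarith
  qed
  then have "\<bar>I - (I1 + I2)\<bar> \<le> 0" by (rule field_le_epsilon)
  then show ?thesis unfolding I_def I1_def I2_def by simp
qed

lemma has_rs_add:
  assumes "has_rs_integral f1 g a b I1" "has_rs_integral f2 g a b I2"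
  shows "has_rs_integral (\<lambda>u. f1 u + f2 u) g a b (I1 + I2)"
  unfolding has_rs_integral_iff
proof (intro allI impI)
  fix e :: real assume "e > 0"
  then have e2: "e / 2 > 0" by simp
  obtain d1 where d1: "d1 > 0" "\<And>xs ts. is_partition xs a b \<and> tagok xs ts \<and> allpairs (\<lambda>x y. y - x < d1) xs \<Longrightarrow>
        \<bar>tsum f1 g xs ts - I1\<bar> < e / 2" using assms(1) e2 unfolding has_rs_integral_iff by blast
  obtain d2 where d2: "d2 > 0" "\<And>xs ts. is_partition xs a b \<and> tagok xs ts \<and> allpairs (\<lambda>x y. y - x < d2) xs \<Longrightarrow>
        \<bar>tsum f2 g xs ts - I2\<bar> < e / 2" using assms(2) e2 unfolding has_rs_integral_iff by blast
  show "\<exists>\<delta>>0. \<forall>xs ts. is_partition xs a b \<and> tagok xs ts \<and> allpairs (\<lambda>x y. y - x < \<delta>) xs \<longrightarrow>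
        \<bar>tsum (\<lambda>u. f1 u + f2 u) g xs ts - (I1 + I2)\<bar> < e"
  proof (intro exI[of _ "min d1 d2"] conjI allI impI)
    fix xs ts assume H: "is_partition xs a b \<and> tagok xs ts \<and> allpairs (\<lambda>x y. y - x < min d1 d2) xs"
    have "\<bar>tsum f1 g xs ts - I1\<bar> < e / 2" using d1(2)[of xs ts] H allpairs_mono[of _ xs] by force
    moreover have "\<bar>tsum f2 g xs ts - I2\<bar> < e / 2" using d2(2)[of xs ts] H allpairs_mono[of _ xs] by force
    ultimately show "\<bar>tsum (\<lambda>u. f1 u + f2 u) g xs ts - (I1 + I2)\<bar> < e"
      unfolding tsum_add by arith
  qed (use d1 d2 in simp)
qed

lemma has_rs_zero: "has_rs_integral (\<lambda>u. 0) g a b 0"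
  unfolding has_rs_integral_iff by (auto simp: tsum_zero intro!: exI[of _ 1])

lemma has_rs_cong:
  assumes "\<And>u. u \<in> {a..b} \<Longrightarrow> f u = f' u"
  shows "has_rs_integral f g a b I \<longleftrightarrow> has_rs_integral f' g a b I"
proof -
  have "tsum f g xs ts = tsum f' g xs ts" if "is_partition xs a b" "tagok xs ts" for xs ts
    using tsum_cong[of ts f f' g xs] tags_in[OF that] assms by blast
  then show ?thesis unfolding has_rs_integral_iff by metis
qed

lemma rs_integral_cong:
  assumes "\<And>u. u \<in> {a..b} \<Longrightarrow> f u = f' u"
  shows "rs_integral f g a b = rs_integral f' g a b"
proof -
  have "has_rs_integral f g a b = has_rs_integral f' g a b"
    by (rule ext) (rule has_rs_cong[OF assms])
  then show ?thesis unfolding rs_integral_def by simp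
qed

lemma rs_integral_sum_list:
  assumes ab: "a < b" and g: "bounded_variation_on g a b"
    and c: "\<And>w. w \<in> set ws \<Longrightarrow> continuous_on {a..b} (\<phi> w)"
  shows "rs_integral (\<lambda>u. sum_list (map (\<lambda>w. \<phi> w u) ws)) g a b = sum_list (map (\<lambda>w. rs_integral (\<phi> w) g a b) ws)"
proof -
  have "has_rs_integral (\<lambda>u. sum_list (map (\<lambda>w. \<phi> w u) ws)) g a b (sum_list (map (\<lambda>w. rs_integral (\<phi> w) g a b) ws))"
    using c
  proof (induction ws)
    case Nil
    then show ?case using has_rs_zero by simp
  next
    case (Cons w ws)
    have "has_rs_integral (\<phi> w) g a b (rs_integral (\<phi> w) g a b)" using rs_has[OF ab Cons.prems[of w] g] by simp
    from has_rs_add[OF this Cons.IH] Cons.prems show ?case by simp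
  qed
  then show ?thesis by (rule rs_integral_eq[OF ab])
qed

lemma indef_diff:
  assumes "a < b" "a \<le> u" "u < v" "v \<le> b" "continuous_on {a..b} f" "bounded_variation_on g a b"
  shows "rs_integral f g a v - rs_integral f g a u = rs_integral f g u v"
proof (cases "u = a")
  case True
  then show ?thesis by (simp add: rs_integral_def)
next
  case False
  then have "a < u" using assms by simp
  have "rs_integral f g a v = rs_integral f g a u + rs_integral f g u v"
    by (rule rs_add_interval[OF \<open>a < u\<close> \<open>u < v\<close> cont_sub[OF assms(5)] bv_sub[OF assms(6)]])
       (use assms in auto)
  then show ?thesis by simp
qed

lemma indef_cont:
  assumes ab: "a < b" and f: "continuous_on {a..b} f" and gc: "continuous_on {a..b} g"
    and g: "bounded_variation_on g a b"
  shows "continuous_on {a..b} (\<lambda>u. rs_integral f g a u)"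
proof -
  define F where "F = (\<lambda>u. rs_integral f g a u)"
  obtain M where M: "M \<ge> 0" "\<And>u. u \<in> {a..b} \<Longrightarrow> \<bar>f u\<bar> \<le> M" using cont_bounded[OF f] by blast
  define V where "V = var g a b"
  have V0: "V \<ge> 0" unfolding V_def using var_nonneg[OF g] by simp
  have key: "\<bar>F v - F u\<bar> \<le> M * \<bar>g v - g u\<bar> + \<eta> * V"
    if u: "a \<le> u" "u < v" "v \<le> b" and eta: "\<eta> \<ge> 0" and osc: "\<And>t. t \<in> {u..v} \<Longrightarrow> \<bar>f t - f u\<bar> \<le> \<eta>" for u v \<eta>
  proof -
    have FD: "F v - F u = rs_integral f g u v" unfolding F_def by (rule indef_diff[OF ab u f g])
    have H: "has_rs_integral f g u v (rs_integral f g u v)"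
      by (rule rs_has[OF u(2) cont_sub[OF f] bv_sub[OF g]]) (use u in auto)
    have "\<bar>rs_integral f g u v - f u * (g v - g u)\<bar> \<le> \<eta> * var g u v"
      by (rule rs_est[OF u(2) H bv_sub[OF g]]) (use u osc in auto)
    also have "\<dots> \<le> \<eta> * V" unfolding V_def using var_mono[OF g] u eta by (simp add: mult_left_mono)
    finally have 1: "\<bar>rs_integral f g u v - f u * (g v - g u)\<bar> \<le> \<eta> * V" .
    have "\<bar>f u * (g v - g u)\<bar> \<le> M * \<bar>g v - g u\<bar>"
      using M(2)[of u] u by (simp add: abs_mult mult_right_mono)
    then show ?thesis using 1 FD by linarith
  qed
  have uc: "uniformly_continuous_on {a..b} f" using compact_uniformly_continuous[OF f compact_Icc] .
  show ?thesis
    unfolding F_def[symmetric] continuous_on_iff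
  proof (intro ballI allI impI)
    fix x e assume x: "x \<in> {a..b}" and e: "(0::real) < e"
    define \<eta> where "\<eta> = e / (2 * (V + 1))"
    have eta: "\<eta> > 0" using e V0 by (simp add: \<eta>_def)
    obtain d1 where d1: "d1 > 0" "\<And>t w. t \<in> {a..b} \<Longrightarrow> w \<in> {a..b} \<Longrightarrow> dist t w < d1 \<Longrightarrow> dist (f t) (f w) < \<eta>"
      using uc eta unfolding uniformly_continuous_on_def by metis
    have e2: "e / (2 * (M + 1)) > 0" using e M by simp
    obtain d2 where d2: "d2 > 0" "\<And>x'. x' \<in> {a..b} \<Longrightarrow> dist x' x < d2 \<Longrightarrow> dist (g x') (g x) < e / (2 * (M + 1))"
      using gc x e2 unfolding continuous_on_iff by metis
    have bnd: "M * \<bar>g x' - g x\<bar> + \<eta> * V < e" if "x' \<in> {a..b}" "dist x' x < d2" for x'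
    proof -
      have "\<bar>g x' - g x\<bar> < e / (2 * (M + 1))" using d2(2)[OF that] by (simp add: dist_real_def)
      then have "M * \<bar>g x' - g x\<bar> \<le> M * (e / (2 * (M + 1)))" using M(1)
        by (intro mult_left_mono) auto
      also have "\<dots> < e / 2" using M(1) e by (simp add: field_simps)
      finally have A: "M * \<bar>g x' - g x\<bar> < e / 2" .
      have "\<eta> * V = (e / 2) * (V / (V + 1))" using V0 by (simp add: \<eta>_def field_simps)
      also have "\<dots> < e / 2 * 1" using V0 e by (intro mult_strict_left_mono) auto
      finally show ?thesis using A by simp
    qed
    show "\<exists>d>0. \<forall>x'\<in>{a..b}. dist x' x < d \<longrightarrow> dist (F x') (F x) < e"
    proof (intro exI[of _ "min d1 d2"] conjI ballI impI)
      fix x' assume x': "x' \<in> {a..b}" and dx: "dist x' x < min d1 d2"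
      have osc: "\<bar>f t - f u\<bar> \<le> \<eta>" if "t \<in> {u..v}" "u \<in> {a..b}" "v \<in> {a..b}" "v - u < d1" for t u v
      proof -
        have "dist (f t) (f u) < \<eta>" using d1(2)[of t u] that by (auto simp: dist_real_def)
        then show ?thesis by (simp add: dist_real_def)
      qed
      consider "x' = x" | "x < x'" | "x' < x" by linarith
      then show "dist (F x') (F x) < e"
      proof cases
        case 1 then show ?thesis using e by simp
      next
        case 2
        have "\<bar>F x' - F x\<bar> \<le> M * \<bar>g x' - g x\<bar> + \<eta> * V"
          by (rule key[OF _ 2 _ less_imp_le[OF eta]]) (use x x' dx osc in \<open>auto simp: dist_real_def\<close>)
        then show ?thesis using bnd[OF x'] dx by (simp add: dist_real_def)
      next
        case 3
        have "\<bar>F x - F x'\<bar> \<le> M * \<bar>g x - g x'\<bar> + \<eta> * V"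
          by (rule key[OF _ 3 _ less_imp_le[OF eta]]) (use x x' dx osc in \<open>auto simp: dist_real_def\<close>)
        then show ?thesis using bnd[OF x'] dx by (simp add: dist_real_def abs_minus_commute)
      qed
    qed (use d1 d2 in simp)
  qed
qed


lemma uc_delta:
  assumes "continuous_on {a..b} (h :: real \<Rightarrow> real)" "\<eta> > 0"
  obtains \<delta> where "\<delta> > 0" "\<And>u w. u \<in> {a..b} \<Longrightarrow> w \<in> {a..b} \<Longrightarrow> \<bar>u - w\<bar> < \<delta> \<Longrightarrow> \<bar>h u - h w\<bar> \<le> \<eta>"
proof -
  have "uniformly_continuous_on {a..b} h" using compact_uniformly_continuous[OF assms(1) compact_Icc] .
  then obtain \<delta> where d: "\<delta> > 0" "\<And>u w. u \<in> {a..b} \<Longrightarrow> w \<in> {a..b} \<Longrightarrow> dist u w < \<delta> \<Longrightarrow> dist (h u) (h w) < \<eta>"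
    using assms(2) unfolding uniformly_continuous_on_def by metis
  show ?thesis
  proof (rule that[OF d(1)])
    fix u w assume "u \<in> {a..b}" "w \<in> {a..b}" "\<bar>u - w\<bar> < \<delta>"
    then have "dist (h u) (h w) < \<eta>" using d(2) by (simp add: dist_real_def)
    then show "\<bar>h u - h w\<bar> \<le> \<eta>" by (simp add: dist_real_def)
  qed
qed

lemma product_rule:
  assumes ab: "a < b" and f: "continuous_on {a..b} f" and g: "continuous_on {a..b} g"
    and \<alpha>c: "continuous_on {a..b} \<alpha>" and \<alpha>: "bounded_variation_on \<alpha> a b"
    and \<beta>c: "continuous_on {a..b} \<beta>" and \<beta>: "bounded_variation_on \<beta> a b"
  shows "rs_integral f \<alpha> a b * rs_integral g \<beta> a b =
    rs_integral (\<lambda>u. f u * rs_integral g \<beta> a u) \<alpha> a b + rs_integral (\<lambda>u. g u * rs_integral f \<alpha> a u) \<beta> a b"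
proof -
  define F where "F = (\<lambda>u. rs_integral f \<alpha> a u)"
  define G where "G = (\<lambda>u. rs_integral g \<beta> a u)"
  have Fc: "continuous_on {a..b} F" unfolding F_def by (rule indef_cont[OF ab f \<alpha>c \<alpha>])
  have Gc: "continuous_on {a..b} G" unfolding G_def by (rule indef_cont[OF ab g \<beta>c \<beta>])
  have Fa: "F a = 0" "G a = 0" by (simp_all add: F_def G_def rs_integral_def)
  define I1 where "I1 = rs_integral (\<lambda>u. f u * G u) \<alpha> a b"
  define I2 where "I2 = rs_integral (\<lambda>u. g u * F u) \<beta> a b"
  have H1: "has_rs_integral (\<lambda>u. f u * G u) \<alpha> a b I1" unfolding I1_def
    by (rule rs_has[OF ab continuous_on_mult[OF f Gc] \<alpha>])
  have H2: "has_rs_integral (\<lambda>u. g u * F u) \<beta> a b I2" unfolding I2_def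
    by (rule rs_has[OF ab continuous_on_mult[OF g Fc] \<beta>])
  obtain Mf where Mf: "Mf \<ge> 0" "\<And>u. u \<in> {a..b} \<Longrightarrow> \<bar>f u\<bar> \<le> Mf" using cont_bounded[OF f] by blast
  obtain MF where MF: "MF \<ge> 0" "\<And>u. u \<in> {a..b} \<Longrightarrow> \<bar>F u\<bar> \<le> MF" using cont_bounded[OF Fc] by blast
  obtain MG where MG: "MG \<ge> 0" "\<And>u. u \<in> {a..b} \<Longrightarrow> \<bar>G u\<bar> \<le> MG" using cont_bounded[OF Gc] by blast
  define V1 where "V1 = var \<alpha> a b"
  define V2 where "V2 = var \<beta> a b"
  have V0: "V1 \<ge> 0" "V2 \<ge> 0" unfolding V1_def V2_def using var_nonneg[OF \<alpha>] var_nonneg[OF \<beta>] by auto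
  define K where "K = (MG + Mf) * V1 + MF * V2"
  have K0: "K \<ge> 0" unfolding K_def using V0 Mf MF MG by simp
  have "\<bar>F b * G b - (I1 + I2)\<bar> \<le> 0 + e" if e: "e > 0" for e
  proof -
    define \<eta> where "\<eta> = e / (3 * (K + 1))"
    have eta: "\<eta> > 0" using e K0 by (simp add: \<eta>_def)
    have etaK: "\<eta> * K < e / 3"
    proof -
      have "\<eta> * K = (e / 3) * (K / (K + 1))" using K0 by (simp add: \<eta>_def field_simps)
      also have "\<dots> < e / 3 * 1" using K0 e by (intro mult_strict_left_mono) auto
      finally show ?thesis by simp
    qed
    have e3: "e / 3 > 0" using e by simp
    obtain d1 where d1: "d1 > 0" "\<And>u w. u \<in> {a..b} \<Longrightarrow> w \<in> {a..b} \<Longrightarrow> \<bar>u - w\<bar> < d1 \<Longrightarrow> \<bar>f u - f w\<bar> \<le> \<eta>"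
      using uc_delta[OF f eta] by blast
    obtain d2 where d2: "d2 > 0" "\<And>u w. u \<in> {a..b} \<Longrightarrow> w \<in> {a..b} \<Longrightarrow> \<bar>u - w\<bar> < d2 \<Longrightarrow> \<bar>g u - g w\<bar> \<le> \<eta>"
      using uc_delta[OF g eta] by blast
    obtain d3 where d3: "d3 > 0" "\<And>u w. u \<in> {a..b} \<Longrightarrow> w \<in> {a..b} \<Longrightarrow> \<bar>u - w\<bar> < d3 \<Longrightarrow> \<bar>G u - G w\<bar> \<le> \<eta>"
      using uc_delta[OF Gc eta] by blast
    obtain d4 where d4: "d4 > 0" "\<And>xs ts. is_partition xs a b \<and> tagok xs ts \<and> allpairs (\<lambda>x y. y - x < d4) xs \<Longrightarrow>
        \<bar>tsum (\<lambda>u. f u * G u) \<alpha> xs ts - I1\<bar> < e / 3" using H1 e3 unfolding has_rs_integral_iff by blast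
    obtain d5 where d5: "d5 > 0" "\<And>xs ts. is_partition xs a b \<and> tagok xs ts \<and> allpairs (\<lambda>x y. y - x < d5) xs \<Longrightarrow>
        \<bar>tsum (\<lambda>u. g u * F u) \<beta> xs ts - I2\<bar> < e / 3" using H2 e3 unfolding has_rs_integral_iff by blast
    define \<delta> where "\<delta> = min (min d1 d2) (min d3 (min d4 d5))"
    have dpos: "\<delta> > 0" using d1 d2 d3 d4 d5 by (simp add: \<delta>_def)
    obtain xs where P: "is_partition xs a b" "allpairs (\<lambda>x y. y - x < \<delta>) xs"
      using exists_fine_partition[OF dpos ab] by blast
    have T: "tagok xs (butlast xs)" by (rule partition_tagok_butlast[OF P(1)])
    have hl: "xs \<noteq> []" "hd xs = a" "last xs = b" using P(1) by (auto simp: is_partition_def)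
    define TT where "TT = (\<lambda>x y. F y * G y - F x * G x)"
    define A where "A = (\<lambda>x y. f x * G x * (\<alpha> y - \<alpha> x) + g x * F x * (\<beta> y - \<beta> x))"
    have sumT: "psum TT xs = F b * G b"
      unfolding TT_def using psum_telescope[OF hl(1), of "\<lambda>u. F u * G u"] hl Fa by simp
    have sumA: "psum A xs = tsum (\<lambda>u. f u * G u) \<alpha> xs (butlast xs) + tsum (\<lambda>u. g u * F u) \<beta> xs (butlast xs)"
      unfolding A_def tsum_butlast psum_add[symmetric] by (simp add: algebra_simps)
    have pair: "\<bar>TT x y - A x y\<bar> \<le> \<eta> * ((MG + Mf) * var \<alpha> x y + MF * var \<beta> x y)"
      if xy: "a \<le> x" "x < y" "y \<le> b" "y - x < \<delta>" for x y
    proof -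
      have osc: "\<bar>h t - h x\<bar> \<le> \<eta>" if "t \<in> {x..y}"
        "\<And>u w. u \<in> {a..b} \<Longrightarrow> w \<in> {a..b} \<Longrightarrow> \<bar>u - w\<bar> < d \<Longrightarrow> \<bar>h u - h w\<bar> \<le> \<eta>" "\<delta> \<le> d" for t h d
        using that xy by (intro that(2)) auto
      have dF: "F y - F x = rs_integral f \<alpha> x y" unfolding F_def by (rule indef_diff[OF ab xy(1,2,3) f \<alpha>])
      have dG: "G y - G x = rs_integral g \<beta> x y" unfolding G_def by (rule indef_diff[OF ab xy(1,2,3) g \<beta>])
      have hF: "has_rs_integral f \<alpha> x y (rs_integral f \<alpha> x y)"
        by (rule rs_has[OF xy(2) cont_sub[OF f] bv_sub[OF \<alpha>]]) (use xy in auto)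
      have hG: "has_rs_integral g \<beta> x y (rs_integral g \<beta> x y)"
        by (rule rs_has[OF xy(2) cont_sub[OF g] bv_sub[OF \<beta>]]) (use xy in auto)
      have eF: "\<bar>(F y - F x) - f x * (\<alpha> y - \<alpha> x)\<bar> \<le> \<eta> * var \<alpha> x y"
        unfolding dF by (rule rs_est[OF xy(2) hF bv_sub[OF \<alpha>]]) (use osc[where h=f and d=d1] xy d1 in \<open>auto simp: \<delta>_def\<close>)
      have eG: "\<bar>(G y - G x) - g x * (\<beta> y - \<beta> x)\<bar> \<le> \<eta> * var \<beta> x y"
        unfolding dG by (rule rs_est[OF xy(2) hG bv_sub[OF \<beta>]]) (use osc[where h=g and d=d2] xy d2 in \<open>auto simp: \<delta>_def\<close>)
      have Gxy: "\<bar>G y - G x\<bar> \<le> \<eta>" using d3(2)[of y x] xy by (auto simp: \<delta>_def)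
      have da: "\<bar>\<alpha> y - \<alpha> x\<bar> \<le> var \<alpha> x y" using var_diff[OF \<alpha>] xy by simp
      have va: "0 \<le> var \<alpha> x y" "0 \<le> var \<beta> x y" using var_nonneg[OF \<alpha>] var_nonneg[OF \<beta>] xy by auto
      have id: "TT x y - A x y = ((F y - F x) - f x * (\<alpha> y - \<alpha> x)) * G y
          + f x * (\<alpha> y - \<alpha> x) * (G y - G x) + F x * ((G y - G x) - g x * (\<beta> y - \<beta> x))"
        unfolding TT_def A_def by (simp add: algebra_simps)
      have b1: "\<bar>((F y - F x) - f x * (\<alpha> y - \<alpha> x)) * G y\<bar> \<le> (\<eta> * var \<alpha> x y) * MG"
        unfolding abs_mult by (rule mult_mono[OF eF MG(2)]) (use xy va eta in auto)
      have b2: "\<bar>f x * (\<alpha> y - \<alpha> x) * (G y - G x)\<bar> \<le> (Mf * var \<alpha> x y) * \<eta>"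
        unfolding abs_mult
        by (rule mult_mono[OF mult_mono[OF Mf(2) da] Gxy]) (use xy Mf va eta in auto)
      have b3: "\<bar>F x * ((G y - G x) - g x * (\<beta> y - \<beta> x))\<bar> \<le> MF * (\<eta> * var \<beta> x y)"
        unfolding abs_mult by (rule mult_mono[OF MF(2) eG]) (use xy MF va eta in auto)
      have "\<bar>TT x y - A x y\<bar> \<le> (\<eta> * var \<alpha> x y) * MG + (Mf * var \<alpha> x y) * \<eta> + MF * (\<eta> * var \<beta> x y)"
        unfolding id using b1 b2 b3 by (smt (verit) abs_triangle_ineq)
      then show ?thesis by (simp add: algebra_simps)
    qed
    have "\<bar>psum (\<lambda>x y. TT x y - A x y) xs\<bar> \<le> psum (\<lambda>x y. \<eta> * ((MG + Mf) * var \<alpha> x y + MF * var \<beta> x y)) xs"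
    proof (rule psum_abs_le)
      have "allpairs (\<lambda>x y. (a \<le> x \<and> x < y \<and> y \<le> b) \<and> y - x < \<delta>) xs"
        using partition_pairs[OF P(1)] P(2) by (simp add: allpairs_conj)
      then show "allpairs (\<lambda>x y. \<bar>TT x y - A x y\<bar> \<le> \<eta> * ((MG + Mf) * var \<alpha> x y + MF * var \<beta> x y)) xs"
        by (rule allpairs_mono) (use pair in blast)
    qed
    also have "\<dots> = \<eta> * ((MG + Mf) * psum (var \<alpha>) xs + MF * psum (var \<beta>) xs)"
      by (simp add: psum_cmult psum_add)
    also have "\<dots> \<le> \<eta> * K"
    proof -
      have "(MG + Mf) * psum (var \<alpha>) xs \<le> (MG + Mf) * V1"
        using var_psum'[OF \<alpha> P(1)] Mf MG unfolding V1_def by (intro mult_left_mono) auto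
      moreover have "MF * psum (var \<beta>) xs \<le> MF * V2"
        using var_psum'[OF \<beta> P(1)] MF unfolding V2_def by (intro mult_left_mono) auto
      ultimately show ?thesis unfolding K_def using eta by (intro mult_left_mono) auto
    qed
    finally have main: "\<bar>F b * G b - psum A xs\<bar> \<le> \<eta> * K" using sumT by (simp add: psum_diff)
    have r1: "\<bar>tsum (\<lambda>u. f u * G u) \<alpha> xs (butlast xs) - I1\<bar> < e / 3"
      using d4(2)[of xs "butlast xs"] P T allpairs_mono[OF P(2), of "\<lambda>x y. y - x < d4"] by (force simp: \<delta>_def)
    have r2: "\<bar>tsum (\<lambda>u. g u * F u) \<beta> xs (butlast xs) - I2\<bar> < e / 3"
      using d5(2)[of xs "butlast xs"] P T allpairs_mono[OF P(2), of "\<lambda>x y. y - x < d5"] by (force simp: \<delta>_def)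
    show ?thesis using main r1 r2 sumA etaK by linarith
  qed
  then have "\<bar>F b * G b - (I1 + I2)\<bar> \<le> 0" by (rule field_le_epsilon)
  then show ?thesis unfolding F_def G_def I1_def I2_def by simp
qed


fun shuf :: "'a list \<Rightarrow> 'a list \<Rightarrow> 'a list list" where
  "shuf [] ys = [ys]"
| "shuf xs [] = [xs]"
| "shuf (x # xs) (y # ys) = map ((#) x) (shuf xs (y # ys)) @ map ((#) y) (shuf (x # xs) ys)"

lemma shuf_set: "w \<in> set (shuf p q) \<Longrightarrow> set w \<subseteq> set p \<union> set q"
proof (induction p q arbitrary: w rule: shuf.induct)
  case (3 x xs y ys)
  then show ?case by fastforce
qed auto

lemma comp_cont:
  assumes "continuous_on {s..t} (\<gamma> :: real \<Rightarrow> 'v::euclidean_space)"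
  shows "continuous_on {s..t} (\<lambda>u. \<gamma> u \<bullet> e)"
  by (intro continuous_on_inner assms continuous_on_const)

lemma comp_bv:
  assumes "bounded_variation_on (\<gamma> :: real \<Rightarrow> 'v::euclidean_space) s t"
  shows "bounded_variation_on (\<lambda>u. \<gamma> u \<bullet> e) s t"
proof -
  obtain B where B: "\<And>xs. is_partition xs s t \<Longrightarrow>
        (\<Sum>i<length xs - 1. norm (\<gamma> (xs ! Suc i) - \<gamma> (xs ! i))) \<le> B"
    using assms unfolding bounded_variation_on_def by blast
  have "(\<Sum>i<length xs - 1. norm (\<gamma> (xs ! Suc i) \<bullet> e - \<gamma> (xs ! i) \<bullet> e)) \<le> B * norm e"
    if "is_partition xs s t" for xs
  proof -
    have "(\<Sum>i<length xs - 1. norm (\<gamma> (xs ! Suc i) \<bullet> e - \<gamma> (xs ! i) \<bullet> e))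
        \<le> (\<Sum>i<length xs - 1. norm (\<gamma> (xs ! Suc i) - \<gamma> (xs ! i)) * norm e)"
    proof (rule sum_mono)
      fix i
      have "norm (\<gamma> (xs ! Suc i) \<bullet> e - \<gamma> (xs ! i) \<bullet> e) = \<bar>(\<gamma> (xs ! Suc i) - \<gamma> (xs ! i)) \<bullet> e\<bar>"
        by (simp add: inner_diff_left)
      also have "\<dots> \<le> norm (\<gamma> (xs ! Suc i) - \<gamma> (xs ! i)) * norm e" by (rule Cauchy_Schwarz_ineq2)
      finally show "norm (\<gamma> (xs ! Suc i) \<bullet> e - \<gamma> (xs ! i) \<bullet> e) \<le> norm (\<gamma> (xs ! Suc i) - \<gamma> (xs ! i)) * norm e" .
    qed
    also have "\<dots> = (\<Sum>i<length xs - 1. norm (\<gamma> (xs ! Suc i) - \<gamma> (xs ! i))) * norm e"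
      by (simp add: sum_distrib_right)
    also have "\<dots> \<le> B * norm e" using B[OF that] by (simp add: mult_right_mono)
    finally show ?thesis .
  qed
  then show ?thesis unfolding bounded_variation_on_def by blast
qed

lemma iter_Cons: "iter_int \<gamma> s (e # w) = (\<lambda>u. rs_integral (iter_int \<gamma> s w) (\<lambda>u. \<gamma> u \<bullet> e) s u)"
  by (rule ext) simp

lemma iter_at_s [simp]: "iter_int \<gamma> s (e # w) s = 0"
  by (simp add: rs_integral_def)

context
  fixes \<gamma> :: "real \<Rightarrow> 'v::euclidean_space" and s t :: real
  assumes st: "s < t" and \<gamma>c: "continuous_on {s..t} \<gamma>" and \<gamma>bv: "bounded_variation_on \<gamma> s t"
begin

lemma iter_cont: "continuous_on {s..t} (iter_int \<gamma> s w)"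
proof (induction w)
  case Nil
  then show ?case by (simp add: continuous_on_const)
next
  case (Cons e w)
  show ?case unfolding iter_Cons
    by (rule indef_cont[OF st Cons.IH comp_cont[OF \<gamma>c] comp_bv[OF \<gamma>bv]])
qed

lemma iter_shuffle:
  "u \<in> {s..t} \<Longrightarrow> iter_int \<gamma> s p u * iter_int \<gamma> s q u = sum_list (map (\<lambda>w. iter_int \<gamma> s w u) (shuf p q))"
proof (induction p q arbitrary: u rule: shuf.induct)
  case (1 ys)
  then show ?case by simp
next
  case (2 x xs)
  then show ?case by simp
next
  case (3 x xs y ys)
  show ?case
  proof (cases "u = s")
    case True
    then show ?thesis by (simp add: o_def rs_integral_def)
  next
    case False
    then have su: "s < u" "u \<le> t" using 3(3) by auto
    define \<alpha> where "\<alpha> = (\<lambda>v. \<gamma> v \<bullet> x)"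
    define \<beta> where "\<beta> = (\<lambda>v. \<gamma> v \<bullet> y)"
    have \<alpha>c: "continuous_on {s..u} \<alpha>" unfolding \<alpha>_def by (rule cont_sub[OF comp_cont[OF \<gamma>c]]) (use su in auto)
    have \<beta>c: "continuous_on {s..u} \<beta>" unfolding \<beta>_def by (rule cont_sub[OF comp_cont[OF \<gamma>c]]) (use su in auto)
    have \<alpha>b: "bounded_variation_on \<alpha> s u" unfolding \<alpha>_def by (rule bv_sub[OF comp_bv[OF \<gamma>bv]]) (use su in auto)
    have \<beta>b: "bounded_variation_on \<beta> s u" unfolding \<beta>_def by (rule bv_sub[OF comp_bv[OF \<gamma>bv]]) (use su in auto)
    have cw: "continuous_on {s..u} (iter_int \<gamma> s w)" for w by (rule cont_sub[OF iter_cont]) (use su in auto)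
    have PR: "rs_integral (iter_int \<gamma> s xs) \<alpha> s u * rs_integral (iter_int \<gamma> s ys) \<beta> s u =
      rs_integral (\<lambda>v. iter_int \<gamma> s xs v * rs_integral (iter_int \<gamma> s ys) \<beta> s v) \<alpha> s u
      + rs_integral (\<lambda>v. iter_int \<gamma> s ys v * rs_integral (iter_int \<gamma> s xs) \<alpha> s v) \<beta> s u"
      by (rule product_rule[OF su(1) cw cw \<alpha>c \<alpha>b \<beta>c \<beta>b])
    have L: "iter_int \<gamma> s (x # xs) u * iter_int \<gamma> s (y # ys) u
       = rs_integral (iter_int \<gamma> s xs) \<alpha> s u * rs_integral (iter_int \<gamma> s ys) \<beta> s u"
      by (simp add: \<alpha>_def \<beta>_def)
    have R1: "rs_integral (\<lambda>v. iter_int \<gamma> s xs v * rs_integral (iter_int \<gamma> s ys) \<beta> s v) \<alpha> s u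
       = sum_list (map (\<lambda>w. iter_int \<gamma> s w u) (map ((#) x) (shuf xs (y # ys))))"
    proof -
      have "rs_integral (\<lambda>v. iter_int \<gamma> s xs v * rs_integral (iter_int \<gamma> s ys) \<beta> s v) \<alpha> s u
        = rs_integral (\<lambda>v. sum_list (map (\<lambda>w. iter_int \<gamma> s w v) (shuf xs (y # ys)))) \<alpha> s u"
      proof (rule rs_integral_cong)
        fix v assume "v \<in> {s..u}"
        then have "v \<in> {s..t}" using su by auto
        then show "iter_int \<gamma> s xs v * rs_integral (iter_int \<gamma> s ys) \<beta> s v
          = sum_list (map (\<lambda>w. iter_int \<gamma> s w v) (shuf xs (y # ys)))"
          using 3(1)[of v] by (simp add: \<beta>_def)
      qed
      also have "\<dots> = sum_list (map (\<lambda>w. rs_integral (iter_int \<gamma> s w) \<alpha> s u) (shuf xs (y # ys)))"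
        by (rule rs_integral_sum_list[OF su(1) \<alpha>b cw])
      also have "\<dots> = sum_list (map (\<lambda>w. iter_int \<gamma> s w u) (map ((#) x) (shuf xs (y # ys))))"
        by (simp add: o_def \<alpha>_def)
      finally show ?thesis .
    qed
    have R2: "rs_integral (\<lambda>v. iter_int \<gamma> s ys v * rs_integral (iter_int \<gamma> s xs) \<alpha> s v) \<beta> s u
       = sum_list (map (\<lambda>w. iter_int \<gamma> s w u) (map ((#) y) (shuf (x # xs) ys)))"
    proof -
      have "rs_integral (\<lambda>v. iter_int \<gamma> s ys v * rs_integral (iter_int \<gamma> s xs) \<alpha> s v) \<beta> s u
        = rs_integral (\<lambda>v. sum_list (map (\<lambda>w. iter_int \<gamma> s w v) (shuf (x # xs) ys))) \<beta> s u"
      proof (rule rs_integral_cong)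
        fix v assume "v \<in> {s..u}"
        then have "v \<in> {s..t}" using su by auto
        then show "iter_int \<gamma> s ys v * rs_integral (iter_int \<gamma> s xs) \<alpha> s v
          = sum_list (map (\<lambda>w. iter_int \<gamma> s w v) (shuf (x # xs) ys))"
          using 3(2)[of v] by (simp add: \<alpha>_def mult.commute)
      qed
      also have "\<dots> = sum_list (map (\<lambda>w. rs_integral (iter_int \<gamma> s w) \<beta> s u) (shuf (x # xs) ys))"
        by (rule rs_integral_sum_list[OF su(1) \<beta>b cw])
      also have "\<dots> = sum_list (map (\<lambda>w. iter_int \<gamma> s w u) (map ((#) y) (shuf (x # xs) ys)))"
        by (simp add: o_def \<beta>_def)
      finally show ?thesis .
    qed
    show ?thesis using L PR R1 R2 by simp
  qed
qed

lemma sig_props: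
  shows "signature \<gamma> s t [] = 1"
    and "\<And>w. w \<notin> lists Basis \<Longrightarrow> signature \<gamma> s t w = 0"
    and "\<And>u v. u \<in> lists Basis \<Longrightarrow> v \<in> lists Basis \<Longrightarrow>
      signature \<gamma> s t u * signature \<gamma> s t v = sum_list (map (signature \<gamma> s t) (map rev (shuf (rev u) (rev v))))"
proof -
  show "signature \<gamma> s t [] = 1" by (simp add: signature_def)
  show "\<And>w. w \<notin> lists Basis \<Longrightarrow> signature \<gamma> s t w = 0" by (simp add: signature_def)
  fix u v :: "'v list" assume u: "u \<in> lists Basis" and v: "v \<in> lists Basis"
  have "signature \<gamma> s t u * signature \<gamma> s t v = iter_int \<gamma> s (rev u) t * iter_int \<gamma> s (rev v) t"
    using u v by (simp add: signature_def)
  also have "\<dots> = sum_list (map (\<lambda>w. iter_int \<gamma> s w t) (shuf (rev u) (rev v)))"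
    using iter_shuffle[of t "rev u" "rev v"] st by simp
  also have "\<dots> = sum_list (map (signature \<gamma> s t) (map rev (shuf (rev u) (rev v))))"
  proof -
    have "signature \<gamma> s t (rev w) = iter_int \<gamma> s w t" if "w \<in> set (shuf (rev u) (rev v))" for w
    proof -
      have "set w \<subseteq> Basis" using shuf_set[OF that] u v by auto
      then show ?thesis by (auto simp: signature_def)
    qed
    then show ?thesis by (simp add: o_def cong: map_cong)
  qed
  finally show "signature \<gamma> s t u * signature \<gamma> s t v = sum_list (map (signature \<gamma> s t) (map rev (shuf (rev u) (rev v))))" .
qed

end

lemma sum_sum_list_swap:
  fixes X :: "('w \<Rightarrow> real) set"
  shows "(\<Sum>x\<in>X. c x * sum_list (map x ks)) = sum_list (map (\<lambda>u. \<Sum>x\<in>X. c x * x u) ks)"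
  by (induction ks) (simp_all add: sum.distrib ring_distribs)

lemma dedekind:
  fixes X :: "('w \<Rightarrow> real) set" and K :: "'w \<Rightarrow> 'w \<Rightarrow> 'w list"
  assumes "finite X"
    and one: "\<And>x. x \<in> X \<Longrightarrow> x eone = 1"
    and zero: "\<And>x w. x \<in> X \<Longrightarrow> w \<notin> L \<Longrightarrow> x w = 0"
    and mult: "\<And>x u v. x \<in> X \<Longrightarrow> u \<in> L \<Longrightarrow> v \<in> L \<Longrightarrow> x u * x v = sum_list (map x (K u v))"
    and dep: "\<And>w. (\<Sum>x\<in>X. c x * x w) = 0"
  shows "\<forall>x\<in>X. c x = 0"
  using assms(1) one zero mult dep
proof (induction "card X" arbitrary: X c rule: less_induct)
  case less
  show ?case
  proof (rule ccontr)
    assume "\<not> (\<forall>x\<in>X. c x = 0)"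
    then obtain x0 where x0: "x0 \<in> X" "c x0 \<noteq> 0" by blast
    show False
    proof (cases "X = {x0}")
      case True
      then have "c x0 * x0 eone = 0" using less.prems(5)[of eone] by simp
      then show False using x0 less.prems(2)[OF x0(1)] by simp
    next
      case False
      then obtain y where y: "y \<in> X" "y \<noteq> x0" using x0 by blast
      have "\<exists>w. x0 w \<noteq> y w" using y(2) by (metis (no_types) ext)
      then obtain w where w: "x0 w \<noteq> y w" by blast
      have wL: "w \<in> L"
      proof (rule ccontr)
        assume "w \<notin> L"
        then have "x0 w = 0" "y w = 0" using less.prems(3)[OF x0(1)] less.prems(3)[OF y(1)] by auto
        then show False using w by simp
      qed
      define c' where "c' = (\<lambda>x. c x * (x w - y w))"
      have A: "(\<Sum>x\<in>X. c x * (x w * x v)) = 0" for v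
      proof (cases "v \<in> L")
        case True
        have "(\<Sum>x\<in>X. c x * (x w * x v)) = (\<Sum>x\<in>X. c x * sum_list (map x (K w v)))"
          using less.prems(4)[OF _ wL True] by simp
        also have "\<dots> = sum_list (map (\<lambda>u. \<Sum>x\<in>X. c x * x u) (K w v))" by (rule sum_sum_list_swap)
        also have "\<dots> = 0" using less.prems(5) by simp
        finally show ?thesis .
      next
        case False
        have "(\<Sum>x\<in>X. c x * (x w * x v)) = (\<Sum>x\<in>X. 0)"
          by (rule sum.cong) (use False less.prems(3) in auto)
        then show ?thesis by simp
      qed
      have B: "(\<Sum>x\<in>X. c x * (y w * x v)) = 0" for v
      proof -
        have "(\<Sum>x\<in>X. c x * (y w * x v)) = y w * (\<Sum>x\<in>X. c x * x v)"
          by (simp add: sum_distrib_left algebra_simps)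
        then show ?thesis using less.prems(5) by simp
      qed
      have C: "(\<Sum>x\<in>X - {y}. c' x * x v) = 0" for v
      proof -
        have "(\<Sum>x\<in>X. c' x * x v) = (\<Sum>x\<in>X. c x * (x w * x v)) - (\<Sum>x\<in>X. c x * (y w * x v))"
          unfolding c'_def sum_subtractf[symmetric] by (rule sum.cong) (auto simp: algebra_simps)
        then have "(\<Sum>x\<in>X. c' x * x v) = 0" using A B by simp
        moreover have "(\<Sum>x\<in>X. c' x * x v) = c' y * y v + (\<Sum>x\<in>X - {y}. c' x * x v)"
          using less.prems(1) y(1) by (simp add: sum.remove)
        moreover have "c' y = 0" by (simp add: c'_def)
        ultimately show ?thesis by simp
      qed
      have "card (X - {y}) < card X" by (rule card_Diff1_less[OF less.prems(1) y(1)])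
      then have "\<forall>x\<in>X - {y}. c' x = 0"
        using less.hyps[of "X - {y}" c'] less.prems C by auto
      then have "c' x0 = 0" using x0 y by simp
      then show False using x0(2) w unfolding c'_def by simp
    qed
  qed
qed

theorem mainTheorem16:
  fixes X :: "('v::euclidean_space list \<Rightarrow> real) set"
    and c :: "('v list \<Rightarrow> real) \<Rightarrow> real"
  assumes "finite X"
    and "X \<subseteq> signatures"
    and "\<And>w. (\<Sum>x\<in>X. c x * x w) = 0"
  shows "\<forall>x\<in>X. c x = 0"
proof (rule dedekind[where eone = "[]" and L = "lists Basis" and K = "\<lambda>u v. map rev (shuf (rev u) (rev v))"])
  show "finite X" by (rule assms(1))
  show "\<And>w. (\<Sum>x\<in>X. c x * x w) = 0" by (rule assms(3))
  have S: "\<And>x. x \<in> X \<Longrightarrow> \<exists>\<gamma> s t. x = signature \<gamma> s t \<and> s < t \<and> continuous_on {s..t} \<gamma> \<and> bounded_variation_on \<gamma> s t"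
    using assms(2) unfolding signatures_def by blast
  show "\<And>x. x \<in> X \<Longrightarrow> x [] = 1" using S sig_props(1) by metis
  show "\<And>x w. x \<in> X \<Longrightarrow> w \<notin> lists Basis \<Longrightarrow> x w = 0" using S sig_props(2) by metis
  show "\<And>x u v. x \<in> X \<Longrightarrow> u \<in> lists Basis \<Longrightarrow> v \<in> lists Basis \<Longrightarrow>
      x u * x v = sum_list (map x (map rev (shuf (rev u) (rev v))))" using S sig_props(3) by metis
qed


end
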